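(* Let $1\le p\le q\le\infty$ and let $\theta,\psi\in[0,1]$ satisfy $1/p=1-\psi+\theta\psi$ and $1/q=\theta\psi$. Then for every $T\in M_n(H)$, $n\in\mathbb{N}$, \[\|T\|_{\Phi_p,\Phi_q}\le\|T\|_{(H_{\min},R(\theta))_\psi}.\]
   Context: $H$ is a separable infinite-dimensional Hilbert space with orthonormal basis $(\xi_i)$. $\Phi_p$ is the $\ell_p$-norm and $\mathfrak{S}_p(\mathbb{C}^n)$ is $M_n$ with the Schatten $p$-norm. For finite $T=\sum_i\xi_i\otimes T_i\in H\otimes M_n\cong M_n(H)$, $\rho_T(x)=\sum_iT_ixT_i^*$ and $\|T\|_{\Phi_p,\Phi_q}=\|\rho_T:\mathfrak{S}_p(\mathbb{C}^n)\to\mathfrak{S}_q(\mathbb{C}^n)\|^{1/2}$. $R$ and $C$ are $H$ with matrix norms $\|\sum_i\xi_i\otimes T_i\|_R=\|\sum_iT_iT_i^*\|^{1/2}$, $\|\sum_i\xi_i\otimes T_i\|_C=\|\sum_iT_i^*T_i\|^{1/2}$. $R(\theta)=(R,C)_\theta$ for $0<\theta<1$, $R(0)=R$, $R(1)=C$, and $H_{\min}$ is $H$ with matrix norms $\|\sum_{i=1}^m\xi_i\otimes T_i\|_{\min}=\sup\{\|\sum_iv_iT_i\|:v\in\ell_2^m,\|v\|=1\}$. For operator spaces $E_0,E_1$ with common base space, $(E_0,E_1)_\psi$ denotes the operator space complex interpolation, $M_n((E_0,E_1)_\psi)=(M_n(E_0),M_n(E_1))_\psi$ (with $(E_0,E_1)_0=E_0$,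 $(E_0,E_1)_1=E_1$). *)

theory Defs
  imports "HOL-Analysis.Analysis"
begin

text \<open>Elements of the (Hilbertian) space H = l2 with basis xi_i are square-summable
  sequences; an element T of M_n(H) is represented by its coefficient sequence
  T = (T_i), T_i :: complex n x n matrices, T = sum_i xi_i (x) T_i.
  The size n is the cardinality of the finite index type 'n.\<close>

type_synonym 'n cmat = "complex^'n^'n"

definition adj :: "'n::finite cmat \<Rightarrow> 'n cmat" where
  "adj A = (\<chi> i j. cnj (A $ j $ i))"

definition msc :: "complex \<Rightarrow> 'n::finite cmat \<Rightarrow> 'n cmat" where
  "msc c A = (\<chi> i j. c * A $ i $ j)"

definition opnorm :: "'n::finite cmat \<Rightarrow> real" where
  "opnorm A = onorm (\<lambda>x::complex^'n. A *v x)"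

definition unitary :: "'n::finite cmat \<Rightarrow> bool" where
  "unitary U \<longleftrightarrow> adj U ** U = mat 1"

definition diagm :: "real^'n \<Rightarrow> 'n::finite cmat" where
  "diagm s = (\<chi> i j. if i = j then complex_of_real (s $ i) else 0)"

definition sing_vals :: "'n::finite cmat \<Rightarrow> real^'n \<Rightarrow> bool" where
  "sing_vals x s \<longleftrightarrow> (\<forall>i. 0 \<le> s $ i) \<and>
     (\<exists>U V. unitary U \<and> unitary V \<and> x = U ** diagm s ** V)"

definition schatten :: "ereal \<Rightarrow> 'n::finite cmat \<Rightarrow> real" where
  "schatten p x = (if p = \<infinity> then opnorm x
     else (let s = (SOME s. sing_vals x s) in
           (\<Sum>i\<in>UNIV. s $ i powr real_of_ereal p) powr (1 / real_of_ereal p)))"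

text \<open>rho_T(x) = sum_i T_i x T_i^* for finitely supported T.\<close>
definition rho :: "(nat \<Rightarrow> 'n::finite cmat) \<Rightarrow> 'n cmat \<Rightarrow> 'n cmat" where
  "rho T x = (\<Sum>i\<in>{i. T i \<noteq> 0}. T i ** x ** adj (T i))"

text \<open>||T||_{Phi_p,Phi_q} = ||rho_T : S_p -> S_q||^(1/2).\<close>
definition phi_norm :: "ereal \<Rightarrow> ereal \<Rightarrow> (nat \<Rightarrow> 'n::finite cmat) \<Rightarrow> real" where
  "phi_norm p q T = sqrt (Sup {schatten q (rho T x) | x. schatten p x \<le> 1})"

definition R_norm :: "(nat \<Rightarrow> 'n::finite cmat) \<Rightarrow> real" where
  "R_norm T = sqrt (opnorm (\<Sum>i. T i ** adj (T i)))"

definition C_norm :: "(nat \<Rightarrow> 'n::finite cmat) \<Rightarrow> real" where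
  "C_norm T = sqrt (opnorm (\<Sum>i. adj (T i) ** T i))"

definition min_norm :: "(nat \<Rightarrow> 'n::finite cmat) \<Rightarrow> real" where
  "min_norm T = Sup {opnorm (\<Sum>i. msc (v i) (T i)) | v.
       summable (\<lambda>i. (cmod (v i))^2) \<and> (\<Sum>i. (cmod (v i))^2) = 1}"

text \<open>Hilbert-space (l2) structure of M_n(H), used only for the topology (all the
  norms above are equivalent to it for fixed n).\<close>
definition l2seq :: "(nat \<Rightarrow> 'n::finite cmat) \<Rightarrow> bool" where
  "l2seq T \<longleftrightarrow> summable (\<lambda>i. (norm (T i))^2)"

definition l2norm :: "(nat \<Rightarrow> 'n::finite cmat) \<Rightarrow> real" where
  "l2norm T = sqrt (\<Sum>i. (norm (T i))^2)"

definition strip :: "complex set" where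
  "strip = {z. 0 \<le> Re z \<and> Re z \<le> 1}"

definition admissible :: "(complex \<Rightarrow> nat \<Rightarrow> 'n::finite cmat) \<Rightarrow> bool" where
  "admissible F \<longleftrightarrow>
     (\<forall>z\<in>strip. l2seq (F z)) \<and>
     (\<exists>B. \<forall>z\<in>strip. l2norm (F z) \<le> B) \<and>
     (\<forall>z\<in>strip. \<forall>e>0. \<exists>d>0. \<forall>w\<in>strip. dist w z < d \<longrightarrow>
          l2norm (\<lambda>i. F w i - F z i) < e) \<and>
     (\<forall>i j k. (\<lambda>z. F z i $ j $ k) holomorphic_on {z. 0 < Re z \<and> Re z < 1})"

definition interp :: "((nat \<Rightarrow> 'n::finite cmat) \<Rightarrow> real) \<Rightarrow> ((nat \<Rightarrow> 'n cmat) \<Rightarrow> real)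
    \<Rightarrow> real \<Rightarrow> (nat \<Rightarrow> 'n cmat) \<Rightarrow> real" where
  "interp N0 N1 t x =
     (if t = 0 then N0 x else if t = 1 then N1 x else
      Inf {max (SUP s::real. N0 (F (\<i> * complex_of_real s)))
               (SUP s::real. N1 (F (1 + \<i> * complex_of_real s))) | F.
           admissible F \<and> F (complex_of_real t) = x})"

end

theory Submission
  imports Defs "HOL-Complex_Analysis.Conformal_Mappings"
begin


definition cinner :: "complex^'n::finite \<Rightarrow> complex^'n \<Rightarrow> complex" where
  "cinner x y = (\<Sum>i\<in>UNIV. cnj (x$i) * y$i)"

definition dg :: "complex^'n::finite \<Rightarrow> 'n cmat" where
  "dg a = (\<chi> i j. if i = j then a$i else 0)"

lemma csum_CS:
  fixes a b :: "'i \<Rightarrow> complex"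
  shows "cmod (\<Sum>i\<in>I. a i * b i) \<le> sqrt (\<Sum>i\<in>I. (cmod (a i))^2) * sqrt (\<Sum>i\<in>I. (cmod (b i))^2)"
proof -
  have "cmod (\<Sum>i\<in>I. a i * b i) \<le> (\<Sum>i\<in>I. cmod (a i) * cmod (b i))"
    by (rule order_trans[OF norm_sum]) (simp add: norm_mult)
  also have "... \<le> sqrt ((\<Sum>i\<in>I. cmod (a i) * cmod (b i))^2)" by simp
  also have "... \<le> sqrt ((\<Sum>i\<in>I. (cmod (a i))^2) * (\<Sum>i\<in>I. (cmod (b i))^2))"
    by (rule real_sqrt_le_mono[OF Cauchy_Schwarz_ineq_sum])
  also have "... = sqrt (\<Sum>i\<in>I. (cmod (a i))^2) * sqrt (\<Sum>i\<in>I. (cmod (b i))^2)"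
    by (simp add: real_sqrt_mult)
  finally show ?thesis .
qed

lemma rsum_CS:
  fixes a b :: "'i \<Rightarrow> real"
  assumes "\<And>i. 0 \<le> a i" "\<And>i. 0 \<le> b i"
  shows "(\<Sum>i\<in>I. a i * b i) \<le> sqrt (\<Sum>i\<in>I. (a i)^2) * sqrt (\<Sum>i\<in>I. (b i)^2)"
proof -
  have "(\<Sum>i\<in>I. a i * b i) \<le> sqrt ((\<Sum>i\<in>I. a i * b i)^2)" by simp
  also have "... \<le> sqrt ((\<Sum>i\<in>I. (a i)^2) * (\<Sum>i\<in>I. (b i)^2))"
    by (rule real_sqrt_le_mono[OF Cauchy_Schwarz_ineq_sum])
  also have "... = sqrt (\<Sum>i\<in>I. (a i)^2) * sqrt (\<Sum>i\<in>I. (b i)^2)"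
    by (simp add: real_sqrt_mult)
  finally show ?thesis .
qed

lemma norm_sq_vec: "(norm (x::'a::real_normed_vector^'n::finite))^2 = (\<Sum>i\<in>UNIV. (norm (x$i))^2)"
  by (simp add: norm_vec_def L2_set_def sum_nonneg)

lemma norm_vec_eq: "norm (x::'a::real_normed_vector^'n::finite) = sqrt (\<Sum>i\<in>UNIV. (norm (x$i))^2)"
  by (simp add: norm_vec_def L2_set_def)

lemma mat_norm_sq: "(norm (M::complex^'n::finite^'m::finite))^2 = (\<Sum>i\<in>UNIV. \<Sum>j\<in>UNIV. (cmod (M$i$j))^2)"
  by (simp add: norm_sq_vec[of M] norm_sq_vec)

lemma mat_norm_sq_col: "(norm (M::complex^'n::finite^'m::finite))^2 = (\<Sum>j\<in>UNIV. (norm (column j M))^2)"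
  by (simp add: mat_norm_sq norm_sq_vec column_def) (rule sum.swap)

lemma sq_le_imp: "(x::real)^2 \<le> y^2 \<Longrightarrow> 0 \<le> y \<Longrightarrow> x \<le> y"
  using power2_le_imp_le by blast

lemma cinner_self: "cinner x x = complex_of_real ((norm x)^2)"
proof -
  have "cinner x x = (\<Sum>i\<in>UNIV. complex_of_real ((cmod (x$i))^2))"
    unfolding cinner_def by (rule sum.cong) (simp_all add: complex_norm_square[symmetric] mult.commute)
  then show ?thesis by (simp add: norm_sq_vec)
qed

lemma cinner_self_re: "Re (cinner x x) = (norm x)^2"
  by (simp add: cinner_self)

lemma cinner_CS: "cmod (cinner x y) \<le> norm x * norm y"
  using csum_CS[of "\<lambda>i. cnj (x$i)" "\<lambda>i. y$i" UNIV] by (simp add: cinner_def norm_vec_eq)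

lemma cinner_add_right: "cinner x (y + z) = cinner x y + cinner x z"
  by (simp add: cinner_def sum.distrib algebra_simps)
lemma cinner_add_left: "cinner (x + y) z = cinner x z + cinner y z"
  by (simp add: cinner_def sum.distrib algebra_simps)
lemma cinner_diff_right: "cinner x (y - z) = cinner x y - cinner x z"
  by (simp add: cinner_def sum_subtractf algebra_simps)
lemma cinner_diff_left: "cinner (x - y) z = cinner x z - cinner y z"
  by (simp add: cinner_def sum_subtractf algebra_simps)
lemma cinner_scale_right: "cinner x (c *s y) = c * cinner x y"
  by (simp add: cinner_def sum_distrib_left algebra_simps)
lemma cinner_scale_left: "cinner (c *s x) y = cnj c * cinner x y"
  by (simp add: cinner_def sum_distrib_left algebra_simps)
lemma cinner_sym: "cinner y x = cnj (cinner x y)"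
  by (simp add: cinner_def cnj_sum mult.commute)
lemma cinner_zero_right[simp]: "cinner x 0 = 0"
  by (simp add: cinner_def)
lemma cinner_zero_left[simp]: "cinner 0 x = 0"
  by (simp add: cinner_def)
lemma cinner_sum_right: "cinner x (\<Sum>k\<in>K. f k) = (\<Sum>k\<in>K. cinner x (f k))"
  by (simp add: cinner_def sum_component sum_distrib_left) (rule sum.swap)
lemma cinner_sum_left: "cinner (\<Sum>k\<in>K. f k) x = (\<Sum>k\<in>K. cinner (f k) x)"
  by (simp add: cinner_def sum_component sum_distrib_right cnj_sum) (rule sum.swap)

lemma norm_add_sq: "(norm (x + y))^2 = (norm x)^2 + 2 * Re (cinner x y) + (norm y)^2"
proof -
  have "(norm (x+y))^2 = Re (cinner (x+y) (x+y))" by (simp add: cinner_self_re)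
  also have "... = Re (cinner x x) + Re (cinner x y) + Re (cinner y x) + Re (cinner y y)"
    by (simp add: cinner_add_left cinner_add_right)
  also have "Re (cinner y x) = Re (cinner x y)" by (subst cinner_sym) simp
  finally show ?thesis by (simp add: cinner_self_re)
qed

lemma mv_nth: "(M *v x)$i = (\<Sum>j\<in>UNIV. M$i$j * x$j)"
  by (simp add: matrix_vector_mult_def)
lemma mm_nth: "(A ** B)$i$j = (\<Sum>k\<in>UNIV. A$i$k * B$k$j)"
  by (simp add: matrix_matrix_mult_def)
lemma adj_nth[simp]: "adj A $i$j = cnj (A$j$i)"
  by (simp add: adj_def)

lemma mv_add: fixes M :: "complex^'n::finite^'m::finite" shows "M *v (x + y) = M *v x + M *v y"
  by (simp add: vec_eq_iff mv_nth sum.distrib algebra_simps)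
lemma mv_diff: fixes M :: "complex^'n::finite^'m::finite" shows "M *v (x - y) = M *v x - M *v y"
  by (simp add: vec_eq_iff mv_nth sum_subtractf right_diff_distrib)
lemma mv_scale: fixes M :: "complex^'n::finite^'m::finite" shows "M *v (c *s x) = c *s (M *v x)"
  by (simp add: vec_eq_iff mv_nth sum_distrib_left mult.left_commute)
lemma mv_sum: fixes M :: "complex^'n::finite^'m::finite" shows "M *v (\<Sum>k\<in>K. f k) = (\<Sum>k\<in>K. M *v f k)"
  by (simp add: vec_eq_iff mv_nth sum_component sum_distrib_left) (rule allI, rule sum.swap)

lemma cinner_mv: "cinner (A *v x) y = cinner x (adj A *v y)"
  unfolding cinner_def mv_nth adj_nth
  apply (simp add: cnj_sum sum_distrib_left sum_distrib_right)
  apply (subst sum.swap)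
  apply (simp add: ac_simps)
  done

lemma norm_mv_opnorm: "norm (M *v x) \<le> opnorm M * norm x"
  unfolding opnorm_def by (rule onorm) simp

lemma opnorm_nonneg: "0 \<le> opnorm M"
  unfolding opnorm_def by (rule onorm_pos_le) simp

lemma mv_le: "norm ((M::complex^'n::finite^'m::finite) *v x) \<le> norm M * norm x"
proof -
  have r: "(cmod ((M *v x)$i))^2 \<le> (norm (M$i))^2 * (norm x)^2" for i
  proof -
    have "cmod ((M *v x)$i) \<le> norm (M$i) * norm x"
      unfolding mv_nth using csum_CS[of "\<lambda>j. M$i$j" "\<lambda>j. x$j" UNIV] by (simp add: norm_vec_eq)
    then show ?thesis by (metis norm_ge_zero power_mono power_mult_distrib)
  qed
  have "(norm (M *v x))^2 \<le> (\<Sum>i\<in>UNIV. (norm (M$i))^2 * (norm x)^2)"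
    unfolding norm_sq_vec[of "M *v x"] by (rule sum_mono) (rule r)
  also have "... = (norm M * norm x)^2"
    by (simp add: norm_sq_vec[of M] sum_distrib_right power_mult_distrib)
  finally show ?thesis by (rule sq_le_imp) simp
qed

lemma opnorm_le_norm: "opnorm M \<le> norm M"
  unfolding opnorm_def by (rule onorm_le) (rule mv_le)

lemma column_mm: "column j (A ** B) = A *v column j B"
  by (simp add: vec_eq_iff column_def mm_nth mv_nth)

lemma mm_le: "norm ((A::complex^'n::finite^'m::finite) ** (B::complex^'k::finite^'n)) \<le> norm A * norm B"
proof -
  have "(norm (A ** B))^2 = (\<Sum>j\<in>UNIV. (norm (A *v column j B))^2)"
    by (simp add: mat_norm_sq_col column_mm)
  also have "... \<le> (\<Sum>j\<in>UNIV. (norm A)^2 * (norm (column j B))^2)"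
    by (rule sum_mono) (metis mv_le norm_ge_zero power_mono power_mult_distrib)
  also have "... = (norm A * norm B)^2"
    by (simp add: mat_norm_sq_col[of B] sum_distrib_left power_mult_distrib)
  finally show ?thesis by (rule sq_le_imp) simp
qed

lemma adj_adj[simp]: "adj (adj A) = A"
  by (simp add: vec_eq_iff)
lemma adj_mm: "adj (A ** B) = adj B ** adj A"
  by (simp add: vec_eq_iff mm_nth cnj_sum mult.commute)
lemma adj_add: "adj (A + B) = adj A + adj B"
  by (simp add: vec_eq_iff)
lemma adj_zero[simp]: "adj 0 = 0"
  by (simp add: vec_eq_iff)
lemma adj_mat1[simp]: "adj (mat 1) = mat 1"
  by (simp add: vec_eq_iff mat_def)
lemma norm_adj[simp]: "norm (adj A) = norm A"
proof -
  have "(norm (adj A))^2 = (norm A)^2"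
    by (simp add: mat_norm_sq) (rule sum.swap)
  then show ?thesis by (metis norm_ge_zero power2_eq_iff_nonneg)
qed

lemma unitary_right: "unitary U \<Longrightarrow> U ** adj U = mat 1"
  unfolding unitary_def using matrix_left_right_inverse by blast
lemma unitary_adj: "unitary U \<Longrightarrow> unitary (adj U)"
  unfolding unitary_def using unitary_right[unfolded unitary_def] by simp
lemma unitary_mult: "unitary U \<Longrightarrow> unitary V \<Longrightarrow> unitary (U ** V)"
  unfolding unitary_def adj_mm
  by (metis matrix_mul_assoc matrix_mul_lid)

lemma unitary_norm_mv: assumes "unitary U" shows "norm (U *v x) = norm x"
proof -
  have "(norm (U *v x))^2 = Re (cinner x (adj U *v (U *v x)))"
    by (simp add: cinner_mv[symmetric] cinner_self_re)
  also have "... = (norm x)^2"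
    using assms by (simp add: matrix_vector_mul_assoc unitary_def cinner_self_re)
  finally show ?thesis by (metis norm_ge_zero power2_eq_iff_nonneg)
qed

lemma norm_unitary_left: assumes "unitary U" shows "norm (U ** M) = norm M"
proof -
  have "(norm (U ** M))^2 = (norm M)^2"
    by (simp add: mat_norm_sq_col column_mm unitary_norm_mv[OF assms])
  then show ?thesis by (metis norm_ge_zero power2_eq_iff_nonneg)
qed

lemma norm_unitary_right: fixes M :: "complex^'n::finite^'n" assumes "unitary U" shows "norm (M ** U) = norm M"
proof -
  have "norm (M ** U) = norm (adj (M ** U))" by simp
  also have "... = norm (adj U ** adj M)" by (simp add: adj_mm)
  also have "... = norm M" using norm_unitary_left[OF unitary_adj[OF assms], of "adj M"] by simp
  finally show ?thesis .
qed

lemma dg_mm_nth: "(dg a ** M)$i$j = a$i * M$i$j"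
proof -
  have "(dg a ** M)$i$j = (\<Sum>k\<in>UNIV. if k = i then a$i * M$i$j else 0)"
    unfolding mm_nth dg_def by (rule sum.cong) auto
  then show ?thesis by simp
qed
lemma mm_dg_nth: "(M ** dg a)$i$j = M$i$j * a$j"
proof -
  have "(M ** dg a)$i$j = (\<Sum>k\<in>UNIV. if k = j then M$i$j * a$j else 0)"
    unfolding mm_nth dg_def by (rule sum.cong) auto
  then show ?thesis by simp
qed

lemma norm_dg_sq: "(norm (dg a))^2 = (\<Sum>i\<in>UNIV. (cmod (a$i))^2)"
proof -
  have "(norm (dg a))^2 = (\<Sum>i\<in>UNIV. \<Sum>j\<in>UNIV. if j = i then (cmod (a$i))^2 else 0)"
    unfolding mat_norm_sq dg_def by (intro sum.cong) auto
  then show ?thesis by simp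
qed

lemma norm_dg_left:
  assumes "\<And>i. cmod (a$i) \<le> c"
  shows "norm (dg a ** M) \<le> c * norm M"
proof -
  have c0: "0 \<le> c" using assms[of undefined] norm_ge_zero order_trans by blast
  have "(norm (dg a ** M))^2 = (\<Sum>i\<in>UNIV. \<Sum>j\<in>UNIV. (cmod (a$i))^2 * (cmod (M$i$j))^2)"
    by (simp add: mat_norm_sq dg_mm_nth norm_mult power_mult_distrib)
  also have "... \<le> (\<Sum>i\<in>UNIV. \<Sum>j\<in>UNIV. c^2 * (cmod (M$i$j))^2)"
    by (intro sum_mono mult_right_mono power_mono assms) auto
  also have "... = (c * norm M)^2"
    by (simp add: mat_norm_sq sum_distrib_left power_mult_distrib)
  finally show ?thesis by (rule sq_le_imp) (simp add: c0)
qed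

lemma norm_dg_right:
  assumes "\<And>i. cmod (a$i) \<le> c"
  shows "norm (M ** dg a) \<le> c * norm M"
proof -
  have c0: "0 \<le> c" using assms[of undefined] norm_ge_zero order_trans by blast
  have "(norm (M ** dg a))^2 = (\<Sum>i\<in>UNIV. \<Sum>j\<in>UNIV. (cmod (a$j))^2 * (cmod (M$i$j))^2)"
    by (simp add: mat_norm_sq mm_dg_nth norm_mult power_mult_distrib mult.commute)
  also have "... \<le> (\<Sum>i\<in>UNIV. \<Sum>j\<in>UNIV. c^2 * (cmod (M$i$j))^2)"
    by (intro sum_mono mult_right_mono power_mono assms) auto
  also have "... = (c * norm M)^2"
    by (simp add: mat_norm_sq sum_distrib_left power_mult_distrib)
  finally show ?thesis by (rule sq_le_imp) (simp add: c0)
qed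


definition ON :: "('k \<Rightarrow> complex^'n::finite) \<Rightarrow> 'k set \<Rightarrow> bool" where
  "ON f A \<longleftrightarrow> (\<forall>j\<in>A. \<forall>k\<in>A. cinner (f j) (f k) = (if j = k then 1 else 0))"

definition colmat :: "('n \<Rightarrow> complex^'n) \<Rightarrow> 'n::finite cmat" where
  "colmat f = (\<chi> i k. f k $ i)"

lemma adj_colmat: "adj (colmat f) ** colmat f = (\<chi> j k. cinner (f j) (f k))"
  by (simp add: vec_eq_iff mm_nth colmat_def cinner_def)

lemma ON_unitary: "ON f UNIV \<Longrightarrow> unitary (colmat f)"
  unfolding unitary_def adj_colmat by (simp add: vec_eq_iff ON_def mat_def)

lemma diagm_dg: "diagm s = dg (\<chi> i. complex_of_real (s$i))"
  by (simp add: diagm_def dg_def vec_eq_iff)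

lemma re_cinner: "Re (cinner a b) = inner a b"
  by (simp add: cinner_def inner_vec_def inner_complex_def)

lemma im_cinner: "Im (cinner a b) = inner (\<i> *s a) b"
  by (simp add: cinner_def inner_vec_def inner_complex_def algebra_simps sum_negf)

lemma norm_scale_vec: "norm (c *s (x::complex^'n::finite)) = cmod c * norm x"
proof -
  have "(norm (c *s x))^2 = (cmod c * norm x)^2"
    by (simp add: norm_sq_vec[of "c *s x"] norm_sq_vec[of x] norm_mult power_mult_distrib sum_distrib_left)
  then show ?thesis by (metis norm_ge_zero zero_le_mult_iff power2_eq_iff_nonneg)
qed

lemma cont_cinner: "continuous_on UNIV (\<lambda>w. cinner a w)"
  unfolding cinner_def by (intro continuous_intros)

lemma exists_orth_unit:
  fixes h :: "'k \<Rightarrow> complex^'n::finite"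
  assumes "finite J" "card J < CARD('n)"
  shows "\<exists>w. norm w = 1 \<and> (\<forall>j\<in>J. cinner (h j) w = 0)"
proof -
  let ?B = "h ` J \<union> (\<lambda>j. \<i> *s h j) ` J"
  have fB: "finite ?B" using assms by simp
  have "card ?B \<le> card (h ` J) + card ((\<lambda>j. \<i> *s h j) ` J)" by (rule card_Un_le)
  also have "... \<le> card J + card J" by (intro add_mono card_image_le assms(1))
  finally have "card ?B < DIM(complex^'n)" using assms(2) by simp
  moreover have "dim ?B \<le> card ?B" using fB by (rule dim_le_card')
  ultimately have "dim ?B < DIM(complex^'n)" by linarith
  then obtain z :: "complex^'n" where z0: "z \<noteq> 0" and zo: "\<And>y. y \<in> span ?B \<Longrightarrow> orthogonal z y"
    by (rule orthogonal_to_subspace_exists) blast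
  define w where "w = complex_of_real (1 / norm z) *s z"
  have "norm w = 1" using z0 by (simp add: w_def norm_scale_vec norm_divide)
  moreover have "cinner (h j) w = 0" if "j \<in> J" for j
  proof -
    have "orthogonal z (h j)" "orthogonal z (\<i> *s h j)" using zo that by (auto intro: span_base)
    then have "inner (h j) z = 0" "inner (\<i> *s h j) z = 0"
      by (auto simp: orthogonal_def inner_commute)
    then have "cinner (h j) z = 0" by (simp add: complex_eq_iff re_cinner im_cinner)
    then show ?thesis by (simp add: w_def cinner_scale_right)
  qed
  ultimately show ?thesis by blast
qed

lemma svd_family:
  fixes x :: "'n::finite cmat"
  shows "\<exists>f::'n \<Rightarrow> complex^'n. ON f UNIV \<and> (\<forall>j k. j \<noteq> k \<longrightarrow> cinner (x *v f j) (x *v f k) = 0)"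
proof -
  have "\<exists>f. ON f K \<and> (\<forall>k\<in>K. \<forall>w. cinner w (f k) = 0 \<longrightarrow> cinner (x *v w) (x *v f k) = 0)"
    if "finite K" for K :: "'n set"
    using that
  proof (induction K rule: finite_induct)
    case empty then show ?case by (simp add: ON_def)
  next
    case (insert a K)
    then obtain f where fON: "ON f K"
      and fP: "\<forall>k\<in>K. \<forall>w. cinner w (f k) = 0 \<longrightarrow> cinner (x *v w) (x *v f k) = 0" by blast
    define M where "M = {w. \<forall>k\<in>K. cinner (f k) w = 0}"
    define C where "C = M \<inter> sphere 0 1"
    have "card (insert a K) \<le> CARD('n)" by (rule card_mono) auto
    then have cardK: "card K < CARD('n)" using insert by simp
    obtain w0 where "norm w0 = 1" "\<forall>k\<in>K. cinner (f k) w0 = 0"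
      using exists_orth_unit[OF insert(1) cardK, of f] by blast
    then have Cne: "C \<noteq> {}" by (auto simp: C_def M_def)
    have closedM: "closed M"
    proof -
      have "M = (\<Inter>k\<in>K. {w. cinner (f k) w = 0})" by (auto simp: M_def)
      moreover have "closed {w. cinner (f k) w = 0}" for k
        by (rule closed_Collect_eq) (simp_all add: cont_cinner)
      ultimately show ?thesis by auto
    qed
    have compC: "compact C" unfolding C_def by (rule closed_Int_compact[OF closedM compact_sphere])
    have contC: "continuous_on C (\<lambda>w. norm (x *v w))"
      by (intro continuous_on_norm continuous_on_subset[OF linear_continuous_on[OF matrix_vector_mul_bounded_linear]]) auto
    obtain v where vC: "v \<in> C" and vmax: "\<forall>y\<in>C. norm (x *v y) \<le> norm (x *v v)"
      using continuous_attains_sup[OF compC Cne contC] by blast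
    define \<sigma> where "\<sigma> = norm (x *v v)"
    have vM: "v \<in> M" and vn: "norm v = 1" using vC by (auto simp: C_def)
    have M_scale: "c *s w \<in> M" if "w \<in> M" for c w using that by (auto simp: M_def cinner_scale_right)
    have M_add: "w + u \<in> M" if "w \<in> M" "u \<in> M" for w u using that by (auto simp: M_def cinner_add_right)
    have bound: "norm (x *v w) \<le> \<sigma> * norm w" if "w \<in> M" for w
    proof (cases "w = 0")
      case True then show ?thesis by simp
    next
      case False
      let ?c = "complex_of_real (1 / norm w)"
      have "?c *s w \<in> C" using False M_scale[OF that] by (simp add: C_def norm_scale_vec norm_divide)
      then have "norm (x *v (?c *s w)) \<le> \<sigma>" using vmax \<sigma>_def by blast
      then have "(1 / norm w) * norm (x *v w) \<le> \<sigma>" by (simp add: mv_scale norm_scale_vec norm_divide)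
      then show ?thesis using False by (simp add: field_simps)
    qed
    have var: "Re (cinner (x *v v) (x *v w)) = 0" if wM: "w \<in> M" and wv: "cinner v w = 0" for w
    proof -
      define c where "c = Re (cinner (x *v v) (x *v w))"
      define D where "D = \<sigma>^2 * (norm w)^2 - (norm (x *v w))^2"
      have D0: "0 \<le> D"
      proof -
        have "(norm (x *v w))^2 \<le> (\<sigma> * norm w)^2" using bound[OF wM] by (intro power_mono) auto
        then show ?thesis by (simp add: D_def power_mult_distrib)
      qed
      have key: "2 * t * c \<le> t^2 * D" for t :: real
      proof -
        let ?u = "v + complex_of_real t *s w"
        have uM: "?u \<in> M" using vM wM M_scale M_add by blast
        have nu: "(norm ?u)^2 = 1 + t^2 * (norm w)^2"
          by (simp add: norm_add_sq cinner_scale_right wv vn norm_scale_vec power_mult_distrib)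
        have xu: "x *v ?u = x *v v + complex_of_real t *s (x *v w)" by (simp add: mv_add mv_scale)
        have nxu: "(norm (x *v ?u))^2 = \<sigma>^2 + 2 * t * c + t^2 * (norm (x *v w))^2"
          unfolding xu by (simp add: norm_add_sq cinner_scale_right \<sigma>_def c_def norm_scale_vec power_mult_distrib)
        have "(norm (x *v ?u))^2 \<le> (\<sigma> * norm ?u)^2" using bound[OF uM] by (intro power_mono) auto
        then show ?thesis unfolding nxu power_mult_distrib nu D_def by (simp add: algebra_simps)
      qed
      have e: "0 < D + 1" using D0 by simp
      define t where "t = c / (D+1)"
      have ct: "c = t * (D+1)" using e by (simp add: t_def)
      have "2 * t * (t * (D+1)) \<le> t^2 * D" using key[of t] ct by simp
      then have "t^2 * (D + 2) \<le> 0" by (simp add: algebra_simps power2_eq_square)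
      then have "t^2 \<le> 0" using D0 by (simp add: mult_le_0_iff)
      then have "t = 0" by simp
      then show ?thesis using ct unfolding c_def by simp
    qed
    have orth: "cinner (x *v w) (x *v v) = 0" if wM: "w \<in> M" and wv: "cinner v w = 0" for w
    proof -
      have r1: "Re (cinner (x *v v) (x *v w)) = 0" by (rule var[OF wM wv])
      have r2: "Re (cinner (x *v v) (x *v (\<i> *s w))) = 0"
        by (rule var) (use M_scale[OF wM] wv in \<open>simp_all add: cinner_scale_right\<close>)
      then have "Im (cinner (x *v v) (x *v w)) = 0" by (simp add: mv_scale cinner_scale_right)
      with r1 have "cinner (x *v v) (x *v w) = 0" by (simp add: complex_eq_iff)
      then show ?thesis by (subst cinner_sym) simp
    qed
    have newP: "cinner (x *v w) (x *v v) = 0" if wv: "cinner w v = 0" for w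
    proof -
      define wM where "wM = w - (\<Sum>k\<in>K. cinner (f k) w *s f k)"
      have "wM \<in> M"
      proof -
        have "cinner (f j) wM = 0" if "j \<in> K" for j
        proof -
          have "cinner (f j) wM = cinner (f j) w - (\<Sum>k\<in>K. cinner (f k) w * (if j = k then 1 else 0))"
            unfolding wM_def cinner_diff_right cinner_sum_right cinner_scale_right
            using fON that by (simp add: ON_def)
          also have "... = 0" using that insert(1) by (simp add: if_distrib cong: if_cong)
          finally show ?thesis .
        qed
        then show ?thesis by (simp add: M_def)
      qed
      moreover have "cinner v wM = 0"
      proof -
        have a1: "cinner v w = 0" using wv by (subst cinner_sym) simp
        have a2: "cinner v (f k) = 0" if "k \<in> K" for k
          using vM that by (subst cinner_sym) (simp add: M_def)
        show ?thesis unfolding wM_def cinner_diff_right cinner_sum_right cinner_scale_right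
          using a1 a2 by simp
      qed
      ultimately have o1: "cinner (x *v wM) (x *v v) = 0" by (rule orth)
      have xw: "x *v w = x *v wM + (\<Sum>k\<in>K. cinner (f k) w *s (x *v f k))"
        by (simp add: wM_def mv_diff mv_sum mv_scale)
      have o2: "cinner (x *v f k) (x *v v) = 0" if "k \<in> K" for k
      proof -
        have "cinner v (f k) = 0" using vM that by (subst cinner_sym) (simp add: M_def)
        then have "cinner (x *v v) (x *v f k) = 0" using fP that by blast
        then show ?thesis by (subst cinner_sym) simp
      qed
      show ?thesis unfolding xw cinner_add_left cinner_sum_left cinner_scale_left
        using o1 o2 by simp
    qed
    define f' where "f' = f(a := v)"
    have "ON f' (insert a K)"
    proof -
      have va: "cinner v (f k) = 0" "cinner (f k) v = 0" if "k \<in> K" for k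
        using vM that by (auto simp: M_def intro: trans[OF cinner_sym])
      have vv: "cinner v v = 1" using vn by (simp add: cinner_self)
      show ?thesis unfolding ON_def
      proof (intro ballI)
        fix j k assume j: "j \<in> insert a K" and k: "k \<in> insert a K"
        show "cinner (f' j) (f' k) = (if j = k then 1 else 0)"
        proof (cases "j = a")
          case True
          then show ?thesis
          proof (cases "k = a")
            case True with \<open>j = a\<close> show ?thesis by (simp add: f'_def vv)
          next
            case False
            then have "k \<in> K" using k by simp
            then show ?thesis using False \<open>j = a\<close> va by (simp add: f'_def)
          qed
        next
          case False
          then have jK: "j \<in> K" using j by simp
          show ?thesis
          proof (cases "k = a")
            case True with False jK va show ?thesis by (simp add: f'_def)
          next
            case kF: False
            then have "k \<in> K" using k by simp
            then show ?thesis using False kF jK fON by (simp add: f'_def ON_def)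
          qed
        qed
      qed
    qed
    moreover have "\<forall>k\<in>insert a K. \<forall>w. cinner w (f' k) = 0 \<longrightarrow> cinner (x *v w) (x *v f' k) = 0"
      using fP newP insert(2) unfolding f'_def by auto
    ultimately show ?case by blast
  qed
  from this[of UNIV] obtain f :: "'n \<Rightarrow> complex^'n" where f1: "ON f UNIV"
    and f2: "\<forall>k. \<forall>w. cinner w (f k) = 0 \<longrightarrow> cinner (x *v w) (x *v f k) = 0" by auto
  have "cinner (x *v f j) (x *v f k) = 0" if "j \<noteq> k" for j k
    using f1 f2 that unfolding ON_def by auto
  with f1 show ?thesis by blast
qed

lemma onb_extend:
  fixes f :: "'n::finite \<Rightarrow> complex^'n"
  assumes "ON f P"
  shows "\<exists>g. (\<forall>k\<in>P. g k = f k) \<and> ON g UNIV"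
proof -
  have "\<exists>g. (\<forall>k\<in>P. g k = f k) \<and> ON g (P \<union> K)" if "finite K" for K
    using that
  proof (induction K rule: finite_induct)
    case empty show ?case using assms by auto
  next
    case (insert a K)
    then obtain g where g1: "\<forall>k\<in>P. g k = f k" and g2: "ON g (P \<union> K)" by blast
    show ?case
    proof (cases "a \<in> P \<union> K")
      case True
      then have "P \<union> insert a K = P \<union> K" by auto
      then show ?thesis using g1 g2 by auto
    next
      case False
      have "P \<union> K \<subset> UNIV" using False by auto
      then have cd: "card (P \<union> K) < CARD('n)" using psubset_card_mono[of UNIV "P \<union> K"] by simp
      obtain w where wn: "norm w = 1" and wo: "\<forall>j\<in>P \<union> K. cinner (g j) w = 0"
        using exists_orth_unit[OF _ cd, of g] by auto
      have wo2: "cinner w (g j) = 0" if "j \<in> P \<union> K" for j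
        using wo that by (subst cinner_sym) simp
      have ww: "cinner w w = 1" using wn by (simp add: cinner_self)
      define g' where "g' = g(a := w)"
      have "ON g' (P \<union> insert a K)"
        unfolding ON_def
      proof (intro ballI)
        fix j k assume j: "j \<in> P \<union> insert a K" and k: "k \<in> P \<union> insert a K"
        show "cinner (g' j) (g' k) = (if j = k then 1 else 0)"
        proof (cases "j = a")
          case True
          then show ?thesis
          proof (cases "k = a")
            case True with \<open>j = a\<close> show ?thesis by (simp add: g'_def ww)
          next
            case False
            then have "k \<in> P \<union> K" using k by simp
            then show ?thesis using False \<open>j = a\<close> wo2 by (simp add: g'_def)
          qed
        next
          case False
          then have jK: "j \<in> P \<union> K" using j by simp
          show ?thesis
          proof (cases "k = a")
            case True with False jK wo show ?thesis by (simp add: g'_def)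
          next
            case kF: False
            then have "k \<in> P \<union> K" using k by simp
            then show ?thesis using False kF jK g2 by (simp add: g'_def ON_def)
          qed
        qed
      qed
      moreover have "\<forall>k\<in>P. g' k = f k" using g1 False by (auto simp: g'_def)
      ultimately show ?thesis by blast
    qed
  qed
  from this[of UNIV] show ?thesis by auto
qed

lemma svd_exists: "\<exists>s. sing_vals (x::'n::finite cmat) s"
proof -
  obtain f :: "'n \<Rightarrow> complex^'n" where fON: "ON f UNIV" and fo: "\<forall>j k. j \<noteq> k \<longrightarrow> cinner (x *v f j) (x *v f k) = 0"
    using svd_family by blast
  define y where "y k = x *v f k" for k
  define s where "s k = norm (y k)" for k
  define P where "P = {k. s k \<noteq> 0}"
  define g0 where "g0 k = complex_of_real (1 / s k) *s y k" for k
  have "ON g0 P"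
    unfolding ON_def
  proof (intro ballI)
    fix j k assume "j \<in> P" "k \<in> P"
    then have sj: "s j \<noteq> 0" and sk: "s k \<noteq> 0" by (auto simp: P_def)
    show "cinner (g0 j) (g0 k) = (if j = k then 1 else 0)"
    proof (cases "j = k")
      case True
      have "cinner (y k) (y k) = complex_of_real ((s k)^2)" by (simp add: s_def cinner_self)
      then show ?thesis using True sk
        by (simp add: g0_def cinner_scale_right cinner_scale_left power2_eq_square)
    next
      case False
      then show ?thesis using fo by (simp add: g0_def cinner_scale_right cinner_scale_left y_def)
    qed
  qed
  then obtain g where gP: "\<forall>k\<in>P. g k = g0 k" and gON: "ON g UNIV" using onb_extend[of g0 P] by blast
  define V0 where "V0 = colmat f"
  define U0 where "U0 = colmat g"
  define sv where "sv = (\<chi> k. s k)"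
  have uV: "unitary V0" and uU: "unitary U0" using fON gON ON_unitary by (auto simp: V0_def U0_def)
  have eq: "x ** V0 = U0 ** diagm sv"
  proof -
    have "(x ** V0)$i$k = (U0 ** diagm sv)$i$k" for i k
    proof -
      have l: "(x ** V0)$i$k = y k $ i" by (simp add: mm_nth V0_def colmat_def y_def mv_nth)
      have r: "(U0 ** diagm sv)$i$k = g k $ i * complex_of_real (s k)"
        by (simp add: diagm_dg mm_dg_nth U0_def colmat_def sv_def)
      show ?thesis
      proof (cases "k \<in> P")
        case True
        then show ?thesis unfolding l r using gP by (simp add: g0_def P_def)
      next
        case False
        then have "y k = 0" by (simp add: P_def s_def)
        then show ?thesis unfolding l r using False by (simp add: P_def)
      qed
    qed
    then show ?thesis by (simp add: vec_eq_iff)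
  qed
  have "x = x ** (V0 ** adj V0)" by (simp add: unitary_right[OF uV])
  also have "... = (x ** V0) ** adj V0" by (rule matrix_mul_assoc)
  also have "... = U0 ** diagm sv ** adj V0" by (simp only: eq)
  finally have "x = U0 ** diagm sv ** adj V0" .
  moreover have "\<forall>i. 0 \<le> sv $ i" by (simp add: sv_def s_def)
  ultimately have "sing_vals x sv" unfolding sing_vals_def using uU unitary_adj[OF uV] by blast
  then show ?thesis by blast
qed


definition Qn :: "nat set \<Rightarrow> 'n::finite cmat \<Rightarrow> 'n cmat \<Rightarrow> (nat \<Rightarrow> 'n cmat) \<Rightarrow> real" where
  "Qn S A B Y = sqrt (\<Sum>i\<in>S. (norm (A ** Y i ** B))^2)"

lemma Qn_nonneg: "0 \<le> Qn S A B Y"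
  by (simp add: Qn_def sum_nonneg)

lemma norm_msc: "norm (msc c (M::'n::finite cmat)) = cmod c * norm M"
proof -
  have "(norm (msc c M))^2 = (cmod c * norm M)^2"
    by (simp add: mat_norm_sq msc_def norm_mult power_mult_distrib sum_distrib_left)
  then show ?thesis by (metis norm_ge_zero zero_le_mult_iff power2_eq_iff_nonneg)
qed

lemma msc_mv: "msc c (M::'n::finite cmat) *v x = c *s (M *v x)"
  by (simp add: vec_eq_iff msc_def mv_nth sum_distrib_left mult.assoc)

lemma sum_mv: "(\<Sum>i\<in>S. (M i::'n::finite cmat)) *v x = (\<Sum>i\<in>S. M i *v x)"
  by (simp add: vec_eq_iff mv_nth sum_component sum_distrib_right) (rule allI, rule sum.swap)

lemma l2seq_summable: "l2seq Y \<Longrightarrow> summable (\<lambda>i. (norm (Y i))^2)"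
  by (simp add: l2seq_def)

lemma l2norm_sq: assumes "l2seq Y" shows "(l2norm Y)^2 = (\<Sum>i. (norm (Y i))^2)"
proof -
  have "0 \<le> (\<Sum>i. (norm (Y i))^2)" by (rule suminf_nonneg) (use assms in \<open>simp_all add: l2seq_def\<close>)
  then show ?thesis by (simp add: l2norm_def)
qed

lemma l2norm_nonneg: assumes "l2seq Y" shows "0 \<le> l2norm Y"
  using l2norm_sq[OF assms] by (metis l2norm_def real_sqrt_ge_zero zero_le_power2 suminf_nonneg l2seq_summable[OF assms])

lemma summable_YY: assumes "l2seq Y" shows "summable (\<lambda>i. Y i ** adj (Y i))"
proof (rule summable_comparison_test'[OF l2seq_summable[OF assms]])
  fix n show "norm (Y n ** adj (Y n)) \<le> (norm (Y n))^2"
    using mm_le[of "Y n" "adj (Y n)"] by (simp add: power2_eq_square)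
qed

lemma l2seq_adj: "l2seq Y \<Longrightarrow> l2seq (\<lambda>i. adj (Y i))"
  by (simp add: l2seq_def)

lemma mat_norm_sq_rows: "(norm (M::'n::finite cmat))^2 = (\<Sum>k\<in>UNIV. (norm (M$k))^2)"
  by (rule norm_sq_vec)

lemma trace_bound:
  fixes A :: "'n::finite cmat" and Y :: "nat \<Rightarrow> 'n cmat"
  assumes Y: "l2seq Y" and S: "finite S"
  shows "(\<Sum>i\<in>S. (norm (A ** Y i))^2) \<le> (norm A)^2 * opnorm (\<Sum>i. Y i ** adj (Y i))"
proof -
  define r where "r k = (\<chi> j. cnj (A$k$j))" for k
  define L where "L M = (\<Sum>k\<in>UNIV. cinner (r k) (M *v r k))" for M :: "'n cmat"
  have nr: "norm (r k) = norm (A$k)" for k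
    by (simp add: norm_vec_eq r_def)
  have key: "(norm (A ** Z))^2 = Re (L (Z ** adj Z))" for Z :: "'n cmat"
  proof -
    have c: "(adj Z *v r k)$l = cnj ((A ** Z)$k$l)" for k l
      by (simp add: mv_nth mm_nth r_def cnj_sum mult.commute)
    have "cinner (r k) ((Z ** adj Z) *v r k) = cinner (adj Z *v r k) (adj Z *v r k)" for k
      by (simp add: cinner_mv matrix_vector_mul_assoc[symmetric])
    then have "L (Z ** adj Z) = (\<Sum>k\<in>UNIV. complex_of_real ((norm (adj Z *v r k))^2))"
      by (simp add: L_def cinner_self)
    then have "Re (L (Z ** adj Z)) = (\<Sum>k\<in>UNIV. (norm (adj Z *v r k))^2)" by simp
    also have "... = (\<Sum>k\<in>UNIV. \<Sum>l\<in>UNIV. (cmod ((A ** Z)$k$l))^2)"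
      by (simp add: norm_sq_vec c)
    finally show ?thesis by (simp add: mat_norm_sq)
  qed
  have sm: "(c *\<^sub>R M) *v x = complex_of_real c *s (M *v x)" for c :: real and M :: "'n cmat" and x :: "complex^'n"
  proof -
    have e: "(c *\<^sub>R M)$i$j = complex_of_real c * M$i$j" for i j
      by (simp only: vector_scaleR_component) (simp add: scaleR_conv_of_real)
    show ?thesis by (simp add: vec_eq_iff mv_nth e sum_distrib_left mult.assoc) (simp add: scaleR_conv_of_real)
  qed
  have bl: "bounded_linear (\<lambda>M. Re (L M))"
  proof (rule bounded_linear_intro[where K = "\<Sum>k\<in>UNIV. (norm (r k))^2"])
    fix M N :: "'n cmat"
    show "Re (L (M + N)) = Re (L M) + Re (L N)"
      by (simp add: L_def matrix_vector_mult_add_rdistrib cinner_add_right sum.distrib)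
  next
    fix c :: real and M :: "'n cmat"
    show "Re (L (c *\<^sub>R M)) = c *\<^sub>R Re (L M)"
      by (simp add: L_def sm cinner_scale_right sum_distrib_left)
  next
    fix M :: "'n cmat"
    have "norm (Re (L M)) \<le> cmod (L M)" by (simp add: abs_Re_le_cmod)
    also have "... \<le> (\<Sum>k\<in>UNIV. cmod (cinner (r k) (M *v r k)))" unfolding L_def by (rule norm_sum)
    also have "... \<le> (\<Sum>k\<in>UNIV. norm M * (norm (r k))^2)"
    proof (rule sum_mono)
      fix k
      have "cmod (cinner (r k) (M *v r k)) \<le> norm (r k) * norm (M *v r k)" by (rule cinner_CS)
      also have "... \<le> norm (r k) * (norm M * norm (r k))" by (intro mult_left_mono mv_le) auto
      finally show "cmod (cinner (r k) (M *v r k)) \<le> norm M * (norm (r k))^2"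
        by (simp add: power2_eq_square ac_simps)
    qed
    also have "... = norm M * (\<Sum>k\<in>UNIV. (norm (r k))^2)" by (simp add: sum_distrib_left)
    finally show "norm (Re (L M)) \<le> norm M * (\<Sum>k\<in>UNIV. (norm (r k))^2)" .
  qed
  define P where "P = (\<Sum>i. Y i ** adj (Y i))"
  have smY: "summable (\<lambda>i. Y i ** adj (Y i))" by (rule summable_YY[OF Y])
  have sm2: "summable (\<lambda>i. Re (L (Y i ** adj (Y i))))"
    by (rule bounded_linear.summable[OF bl smY])
  have "(\<Sum>i\<in>S. (norm (A ** Y i))^2) = (\<Sum>i\<in>S. Re (L (Y i ** adj (Y i))))" by (simp add: key)
  also have "... \<le> (\<Sum>i. Re (L (Y i ** adj (Y i))))"
    by (rule sum_le_suminf[OF sm2 S]) (simp add: key[symmetric])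
  also have "... = Re (L P)" unfolding P_def by (rule bounded_linear.suminf[OF bl smY, symmetric])
  also have "... \<le> cmod (L P)" by (rule complex_Re_le_cmod)
  also have "... \<le> (\<Sum>k\<in>UNIV. cmod (cinner (r k) (P *v r k)))" unfolding L_def by (rule norm_sum)
  also have "... \<le> (\<Sum>k\<in>UNIV. opnorm P * (norm (r k))^2)"
  proof (rule sum_mono)
    fix k
    have "cmod (cinner (r k) (P *v r k)) \<le> norm (r k) * norm (P *v r k)" by (rule cinner_CS)
    also have "... \<le> norm (r k) * (opnorm P * norm (r k))" by (intro mult_left_mono norm_mv_opnorm) auto
    finally show "cmod (cinner (r k) (P *v r k)) \<le> opnorm P * (norm (r k))^2"
      by (simp add: power2_eq_square ac_simps)
  qed
  also have "... = (norm A)^2 * opnorm P"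
    by (simp add: sum_distrib_left[symmetric] nr mat_norm_sq_rows[of A] mult.commute)
  finally show ?thesis unfolding P_def .
qed


lemma summable_YY_norm: assumes "l2seq Y" shows "summable (\<lambda>i. norm (Y i ** adj (Y i)))"
proof (rule summable_comparison_test'[OF l2seq_summable[OF assms]])
  fix n show "norm (norm (Y n ** adj (Y n))) \<le> (norm (Y n))^2"
    using mm_le[of "Y n" "adj (Y n)"] by (simp add: power2_eq_square)
qed

lemma R_bound: assumes Y: "l2seq Y" shows "0 \<le> R_norm Y" "R_norm Y \<le> l2norm Y"
proof -
  show "0 \<le> R_norm Y" by (simp add: R_norm_def opnorm_nonneg)
  have "opnorm (\<Sum>i. Y i ** adj (Y i)) \<le> norm (\<Sum>i. Y i ** adj (Y i))" by (rule opnorm_le_norm)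
  also have "... \<le> (\<Sum>i. norm (Y i ** adj (Y i)))" by (rule summable_norm[OF summable_YY_norm[OF Y]])
  also have "... \<le> (\<Sum>i. (norm (Y i))^2)"
    by (rule suminf_le[OF _ summable_YY_norm[OF Y] l2seq_summable[OF Y]])
       (metis mm_le norm_adj power2_eq_square)
  also have "... = (l2norm Y)^2" by (simp add: l2norm_sq[OF Y])
  finally show "R_norm Y \<le> l2norm Y" unfolding R_norm_def
    using l2norm_nonneg[OF Y] real_sqrt_le_mono by fastforce
qed

lemma C_norm_adj: "C_norm Y = R_norm (\<lambda>i. adj (Y i))"
  by (simp add: C_norm_def R_norm_def)

lemma l2norm_adj: "l2norm (\<lambda>i. adj (Y i)) = l2norm Y"
  by (simp add: l2norm_def)

lemma C_bound: assumes Y: "l2seq Y" shows "0 \<le> C_norm Y" "C_norm Y \<le> l2norm Y"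
  using R_bound[OF l2seq_adj[OF Y]] by (simp_all add: C_norm_adj l2norm_adj)

lemma msc_norm_le: "norm (msc v (M::'n::finite cmat)) \<le> ((cmod v)^2 + (norm M)^2) / 2"
proof -
  have "0 \<le> (cmod v - norm M)^2" by simp
  then show ?thesis by (simp add: norm_msc power2_eq_square algebra_simps)
qed

lemma msc_summable:
  assumes X: "l2seq X" and v: "summable (\<lambda>i. (cmod (v i))^2)"
  shows "summable (\<lambda>i. norm (msc (v i) (X i)))"
    and "(\<Sum>i. norm (msc (v i) (X i))) \<le> ((\<Sum>i. (cmod (v i))^2) + (\<Sum>i. (norm (X i))^2)) / 2"
proof -
  have s2: "summable (\<lambda>i. ((cmod (v i))^2 + (norm (X i))^2) / 2)"
    by (intro summable_divide summable_add v l2seq_summable[OF X])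
  show s1: "summable (\<lambda>i. norm (msc (v i) (X i)))"
    by (rule summable_comparison_test'[OF s2]) (metis msc_norm_le norm_ge_zero real_norm_def abs_of_nonneg)
  have "(\<Sum>i. norm (msc (v i) (X i))) \<le> (\<Sum>i. ((cmod (v i))^2 + (norm (X i))^2) / 2)"
    by (rule suminf_le[OF _ s1 s2]) (rule msc_norm_le)
  also have "... = ((\<Sum>i. (cmod (v i))^2) + (\<Sum>i. (norm (X i))^2)) / 2"
    using suminf_divide[OF summable_add[OF v l2seq_summable[OF X]], of 2]
          suminf_add[OF v l2seq_summable[OF X]] by simp
  finally show "(\<Sum>i. norm (msc (v i) (X i))) \<le> ((\<Sum>i. (cmod (v i))^2) + (\<Sum>i. (norm (X i))^2)) / 2" .
qed

lemma mn_elem_le: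
  assumes X: "l2seq X" and v: "summable (\<lambda>i. (cmod (v i))^2)" "(\<Sum>i. (cmod (v i))^2) = 1"
  shows "opnorm (\<Sum>i. msc (v i) (X i)) \<le> (1 + (l2norm X)^2) / 2"
proof -
  have "opnorm (\<Sum>i. msc (v i) (X i)) \<le> norm (\<Sum>i. msc (v i) (X i))" by (rule opnorm_le_norm)
  also have "... \<le> (\<Sum>i. norm (msc (v i) (X i)))" by (rule summable_norm[OF msc_summable(1)[OF X v(1)]])
  also have "... \<le> (1 + (l2norm X)^2) / 2"
    using msc_summable(2)[OF X v(1)] v(2) by (simp add: l2norm_sq[OF X])
  finally show ?thesis .
qed

lemma mn_bdd: assumes X: "l2seq X"
  shows "bdd_above {opnorm (\<Sum>i. msc (v i) (X i)) | v.
       summable (\<lambda>i. (cmod (v i))^2) \<and> (\<Sum>i. (cmod (v i))^2) = 1}"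
  using mn_elem_le[OF X] by (auto intro!: bdd_aboveI[where M="(1 + (l2norm X)^2)/2"])

lemma mn_upper:
  assumes X: "l2seq X" and v: "summable (\<lambda>i. (cmod (v i))^2)" "(\<Sum>i. (cmod (v i))^2) = 1"
  shows "opnorm (\<Sum>i. msc (v i) (X i)) \<le> min_norm X"
  unfolding min_norm_def by (rule cSup_upper[OF _ mn_bdd[OF X]]) (use v in blast)

lemma mn_witness:
  "summable (\<lambda>i. (cmod (if i = (0::nat) then (1::complex) else 0))^2) \<and>
   (\<Sum>i. (cmod (if i = (0::nat) then (1::complex) else 0))^2) = 1"
proof -
  have "summable (\<lambda>i. (cmod (if i = (0::nat) then (1::complex) else 0))^2)"
    by (rule summable_finite[of "{0}"]) auto
  moreover have "(\<Sum>i. (cmod (if i = (0::nat) then (1::complex) else 0))^2) = 1"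
    by (subst suminf_finite[of "{0}"]) auto
  ultimately show ?thesis by blast
qed

lemma mn_bounds: assumes X: "l2seq X"
  shows "0 \<le> min_norm X" "min_norm X \<le> (1 + (l2norm X)^2) / 2"
proof -
  let ?v = "\<lambda>i. if i = (0::nat) then (1::complex) else 0"
  have "0 \<le> opnorm (\<Sum>i. msc (?v i) (X i))" by (rule opnorm_nonneg)
  also have "... \<le> min_norm X" using mn_witness by (intro mn_upper[OF X]) auto
  finally show "0 \<le> min_norm X" .
  show "min_norm X \<le> (1 + (l2norm X)^2) / 2"
    unfolding min_norm_def
    by (rule cSup_least) (use mn_witness mn_elem_le[OF X] in auto)
qed

lemma bil:
  fixes r c :: "complex^'n::finite" and X :: "nat \<Rightarrow> 'n cmat"
  assumes X: "l2seq X" and S: "finite S"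
  shows "(\<Sum>i\<in>S. (cmod (\<Sum>n\<in>UNIV. (\<Sum>m\<in>UNIV. r$m * X i$m$n) * c$n))^2)
           \<le> (norm r * norm c * min_norm X)^2"
proof -
  define \<gamma> where "\<gamma> i = (\<Sum>n\<in>UNIV. (\<Sum>m\<in>UNIV. r$m * X i$m$n) * c$n)" for i
  define G where "G = sqrt (\<Sum>i\<in>S. (cmod (\<gamma> i))^2)"
  have G0: "0 \<le> G" by (simp add: G_def sum_nonneg)
  have G2: "G^2 = (\<Sum>i\<in>S. (cmod (\<gamma> i))^2)" by (simp add: G_def sum_nonneg)
  have m0: "0 \<le> min_norm X" by (rule mn_bounds(1)[OF X])
  have "G \<le> norm r * norm c * min_norm X"
  proof (cases "G = 0")
    case True then show ?thesis using m0 by simp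
  next
    case False
    then have Gp: "0 < G" using G0 by simp
    define v where "v i = (if i \<in> S then cnj (\<gamma> i) / complex_of_real G else 0)" for i
    have sv: "summable (\<lambda>i. (cmod (v i))^2)" by (rule summable_finite[OF S]) (simp add: v_def)
    have "(\<Sum>i. (cmod (v i))^2) = (\<Sum>i\<in>S. (cmod (v i))^2)" by (rule suminf_finite[OF S]) (simp add: v_def)
    also have "... = (\<Sum>i\<in>S. (cmod (\<gamma> i))^2 / G^2)"
      by (rule sum.cong) (simp_all add: v_def norm_divide power_divide)
    also have "... = 1" using Gp by (simp add: sum_divide_distrib[symmetric] G2[symmetric])
    finally have sv1: "(\<Sum>i. (cmod (v i))^2) = 1" .
    define Z where "Z = (\<Sum>i. msc (v i) (X i))"
    have Zeq: "Z = (\<Sum>i\<in>S. msc (v i) (X i))" unfolding Z_def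
      by (rule suminf_finite[OF S]) (simp add: v_def msc_def vec_eq_iff)
    define rr where "rr = (\<chi> m. cnj (r$m))"
    have nrr: "norm rr = norm r" by (simp add: rr_def norm_vec_eq)
    have gi: "cinner rr (X i *v c) = \<gamma> i" for i
      unfolding \<gamma>_def cinner_def rr_def mv_nth
      by (simp add: sum_distrib_left sum_distrib_right mult.assoc) (rule sum.swap)
    have "cinner rr (Z *v c) = (\<Sum>i\<in>S. v i * \<gamma> i)"
      unfolding Zeq sum_mv msc_mv cinner_sum_right cinner_scale_right gi ..
    also have "... = (\<Sum>i\<in>S. complex_of_real ((cmod (\<gamma> i))^2 / G))"
    proof (rule sum.cong[OF refl])
      fix i assume i: "i \<in> S"
      have cn: "cnj (\<gamma> i) * \<gamma> i = complex_of_real ((cmod (\<gamma> i))^2)"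
        by (metis complex_norm_square mult.commute)
      have "v i * \<gamma> i = (cnj (\<gamma> i) * \<gamma> i) / complex_of_real G" using i by (simp add: v_def)
      also have "... = complex_of_real ((cmod (\<gamma> i))^2) / complex_of_real G" by (simp only: cn)
      also have "... = complex_of_real ((cmod (\<gamma> i))^2 / G)" by (simp only: of_real_divide)
      finally show "v i * \<gamma> i = complex_of_real ((cmod (\<gamma> i))^2 / G)" .
    qed
    also have "... = complex_of_real G"
    proof -
      have "(\<Sum>i\<in>S. (cmod (\<gamma> i))^2 / G) = (\<Sum>i\<in>S. (cmod (\<gamma> i))^2) / G"
        by (rule sum_divide_distrib[symmetric])
      also have "... = G^2 / G" by (simp only: G2)
      also have "... = G" using Gp by (simp add: power2_eq_square)
      finally have rs: "(\<Sum>i\<in>S. (cmod (\<gamma> i))^2 / G) = G" .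
      show ?thesis by (simp only: of_real_sum[symmetric] rs)
    qed
    finally have ci: "cinner rr (Z *v c) = complex_of_real G" .
    have "G = cmod (cinner rr (Z *v c))" using G0 by (simp add: ci)
    also have "... \<le> norm rr * norm (Z *v c)" by (rule cinner_CS)
    also have "... \<le> norm r * (opnorm Z * norm c)" unfolding nrr
      by (intro mult_left_mono norm_mv_opnorm) auto
    also have "... \<le> norm r * (min_norm X * norm c)"
      using mn_upper[OF X sv sv1] by (intro mult_left_mono mult_right_mono) (auto simp: Z_def)
    finally show ?thesis by (simp add: ac_simps)
  qed
  then have "G^2 \<le> (norm r * norm c * min_norm X)^2" using G0 by (intro power_mono) auto
  then show ?thesis by (simp add: G2 \<gamma>_def)
qed

lemma E0:
  fixes A B :: "'n::finite cmat" and X :: "nat \<Rightarrow> 'n cmat"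
  assumes X: "l2seq X" and S: "finite S"
  shows "Qn S A B X \<le> norm A * norm B * min_norm X"
proof -
  define f where "f i k l = (cmod ((A ** X i ** B)$k$l))^2" for i k l
  have e: "(A ** X i ** B)$k$l = (\<Sum>n\<in>UNIV. (\<Sum>m\<in>UNIV. (A$k)$m * X i$m$n) * (column l B)$n)" for i k l
    by (simp add: mm_nth column_def)
  have "(\<Sum>i\<in>S. (norm (A ** X i ** B))^2) = (\<Sum>i\<in>S. \<Sum>k\<in>UNIV. \<Sum>l\<in>UNIV. f i k l)"
    by (simp add: mat_norm_sq f_def)
  also have "... = (\<Sum>k\<in>UNIV. \<Sum>i\<in>S. \<Sum>l\<in>UNIV. f i k l)" by (rule sum.swap)
  also have "... = (\<Sum>k\<in>UNIV. \<Sum>l\<in>UNIV. \<Sum>i\<in>S. f i k l)"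
    by (rule sum.cong[OF refl]) (rule sum.swap)
  also have "... \<le> (\<Sum>k\<in>UNIV. \<Sum>l\<in>UNIV. (norm (A$k) * norm (column l B) * min_norm X)^2)"
    unfolding f_def e by (intro sum_mono bil[OF X S])
  also have "... = (norm A * norm B * min_norm X)^2"
    by (simp add: power_mult_distrib sum_distrib_left[symmetric] sum_distrib_right[symmetric]
        mat_norm_sq_rows[of A, symmetric] mat_norm_sq_col[of B, symmetric])
  finally have "(Qn S A B X)^2 \<le> (norm A * norm B * min_norm X)^2"
    by (simp add: Qn_def sum_nonneg)
  then show ?thesis by (rule sq_le_imp) (simp add: mn_bounds(1)[OF X])
qed

lemma ER:
  fixes A W :: "'n::finite cmat" and Y :: "nat \<Rightarrow> 'n cmat"
  assumes Y: "l2seq Y" and S: "finite S" and W: "unitary W" and b: "\<And>i. cmod (b$i) \<le> c"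
  shows "Qn S A (W ** dg b) Y \<le> norm A * c * R_norm Y"
proof -
  have c0: "0 \<le> c" using b[of undefined] norm_ge_zero order_trans by blast
  have "(\<Sum>i\<in>S. (norm (A ** Y i ** (W ** dg b)))^2) \<le> (\<Sum>i\<in>S. c^2 * (norm (A ** Y i))^2)"
  proof (rule sum_mono)
    fix i
    have "norm (A ** Y i ** (W ** dg b)) = norm ((A ** Y i ** W) ** dg b)" by (simp add: matrix_mul_assoc)
    also have "... \<le> c * norm (A ** Y i ** W)" by (rule norm_dg_right[OF b])
    also have "... = c * norm (A ** Y i)" by (simp add: norm_unitary_right[OF W])
    finally show "(norm (A ** Y i ** (W ** dg b)))^2 \<le> c^2 * (norm (A ** Y i))^2"
      by (metis norm_ge_zero power_mono power_mult_distrib)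
  qed
  also have "... = c^2 * (\<Sum>i\<in>S. (norm (A ** Y i))^2)" by (simp add: sum_distrib_left)
  also have "... \<le> c^2 * ((norm A)^2 * opnorm (\<Sum>i. Y i ** adj (Y i)))"
    by (intro mult_left_mono trace_bound[OF Y S]) auto
  also have "... = (norm A * c * R_norm Y)^2"
    by (simp add: R_norm_def power_mult_distrib opnorm_nonneg)
  finally have "(Qn S A (W ** dg b) Y)^2 \<le> (norm A * c * R_norm Y)^2"
    by (simp add: Qn_def sum_nonneg)
  then show ?thesis by (rule sq_le_imp) (simp add: R_bound(1)[OF Y] c0)
qed

lemma EC:
  fixes B W :: "'n::finite cmat" and Y :: "nat \<Rightarrow> 'n cmat"
  assumes Y: "l2seq Y" and S: "finite S" and W: "unitary W" and a: "\<And>i. cmod (a$i) \<le> c"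
  shows "Qn S (dg a ** W) B Y \<le> c * norm B * C_norm Y"
proof -
  have c0: "0 \<le> c" using a[of undefined] norm_ge_zero order_trans by blast
  have "(\<Sum>i\<in>S. (norm ((dg a ** W) ** Y i ** B))^2) \<le> (\<Sum>i\<in>S. c^2 * (norm (adj B ** adj (Y i)))^2)"
  proof (rule sum_mono)
    fix i
    have "norm ((dg a ** W) ** Y i ** B) = norm (dg a ** (W ** (Y i ** B)))" by (simp add: matrix_mul_assoc)
    also have "... \<le> c * norm (W ** (Y i ** B))" by (rule norm_dg_left[OF a])
    also have "... = c * norm (adj B ** adj (Y i))"
      by (simp add: norm_unitary_left[OF W] adj_mm[symmetric])
    finally show "(norm ((dg a ** W) ** Y i ** B))^2 \<le> c^2 * (norm (adj B ** adj (Y i)))^2"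
      by (metis norm_ge_zero power_mono power_mult_distrib)
  qed
  also have "... = c^2 * (\<Sum>i\<in>S. (norm (adj B ** adj (Y i)))^2)" by (simp add: sum_distrib_left)
  also have "... \<le> c^2 * ((norm (adj B))^2 * opnorm (\<Sum>i. adj (Y i) ** adj (adj (Y i))))"
    by (intro mult_left_mono trace_bound[OF l2seq_adj[OF Y] S]) auto
  also have "... = (c * norm B * C_norm Y)^2"
    by (simp add: C_norm_def power_mult_distrib opnorm_nonneg)
  finally have "(Qn S (dg a ** W) B Y)^2 \<le> (c * norm B * C_norm Y)^2"
    by (simp add: Qn_def sum_nonneg)
  then show ?thesis by (rule sq_le_imp) (simp add: C_bound(1)[OF Y] c0)
qed


lemma three_lines:
  fixes g :: "complex \<Rightarrow> complex"
  assumes hol: "g holomorphic_on {z. 0 < Re z \<and> Re z < 1}"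
    and cont: "continuous_on strip g"
    and bdd: "\<And>z. z \<in> strip \<Longrightarrow> cmod (g z) \<le> C"
    and b0: "\<And>y. cmod (g (\<i> * complex_of_real y)) \<le> M"
    and b1: "\<And>y. cmod (g (1 + \<i> * complex_of_real y)) \<le> M"
    and t: "0 \<le> t" "t \<le> 1"
  shows "cmod (g (complex_of_real t)) \<le> M"
proof -
  have M0: "0 \<le> M" by (rule order_trans[OF norm_ge_zero b0[of 0]])
  have s0: "0 \<in> strip" by (simp add: strip_def)
  have C0: "0 \<le> C" by (rule order_trans[OF norm_ge_zero bdd[OF s0]])
  have main: "cmod (g (complex_of_real t)) \<le> (M + d) * (1 + d)" if d: "0 < d" for d
  proof -
    define Y where "Y = C / (d * (M + d)) + 1"
    have Md: "0 < M + d" using M0 d by simp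
    have q0: "0 \<le> C / (d * (M + d))" using C0 Md d by simp
    have Yp: "0 < Y" using q0 by (simp add: Y_def)
    have YC: "C \<le> d * Y * (M + d)"
    proof -
      have nz0: "d * (M + d) \<noteq> 0" using Md d by simp
      have "d * Y * (M + d) = (d * (M + d)) * (C / (d * (M + d))) + d * (M + d)"
        by (simp add: Y_def algebra_simps)
      also have "(d * (M + d)) * (C / (d * (M + d))) = C" using nz0 by simp
      finally have "d * Y * (M + d) = C + d * (M + d)" .
      then show ?thesis using Md d by simp
    qed
    define h where "h z = g z / (1 + complex_of_real d * z)" for z
    define R where "R = cbox (Complex 0 (-Y)) (Complex 1 Y)"
    have Rs: "R \<subseteq> strip" by (auto simp: R_def in_cbox_complex_iff strip_def)
    have lb: "1 \<le> cmod (1 + complex_of_real d * z)" if "z \<in> strip" for z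
    proof -
      have "1 \<le> Re (1 + complex_of_real d * z)" using that d by (simp add: strip_def)
      also have "... \<le> cmod (1 + complex_of_real d * z)" by (rule complex_Re_le_cmod)
      finally show ?thesis .
    qed
    have lb2: "d * \<bar>Im z\<bar> \<le> cmod (1 + complex_of_real d * z)" for z
    proof -
      have "d * \<bar>Im z\<bar> = \<bar>Im (1 + complex_of_real d * z)\<bar>" using d by (simp add: abs_mult)
      also have "... \<le> cmod (1 + complex_of_real d * z)" by (rule abs_Im_le_cmod)
      finally show ?thesis .
    qed
    have nz: "1 + complex_of_real d * z \<noteq> 0" if "z \<in> strip" for z
      using lb[OF that] by auto
    have intR: "interior R \<subseteq> {z. 0 < Re z \<and> Re z < 1}"
      by (auto simp: R_def in_box_complex_iff)
    have holh: "h holomorphic_on interior R"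
      unfolding h_def
      by (intro holomorphic_on_divide holomorphic_on_subset[OF hol intR] holomorphic_intros)
         (use intR nz in \<open>auto simp: strip_def\<close>)
    have conth: "continuous_on (closure R) h"
      unfolding h_def R_def closure_cbox
      by (intro continuous_on_divide continuous_on_subset[OF cont] continuous_intros)
         (use Rs nz in \<open>auto simp: R_def\<close>)
    have tR: "complex_of_real t \<in> R" using t Yp by (simp add: R_def in_cbox_complex_iff)
    have fr: "cmod (h z) \<le> M + d" if "z \<in> frontier R" for z
    proof -
      have zR: "z \<in> R" and nb: "z \<notin> box (Complex 0 (-Y)) (Complex 1 Y)"
        using that by (auto simp: R_def frontier_cbox)
      have zs: "z \<in> strip" using zR Rs by auto
      have hz: "cmod (h z) = cmod (g z) / cmod (1 + complex_of_real d * z)"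
        by (simp add: h_def norm_divide)
      have r1: "cmod (h z) \<le> cmod (g z)"
        unfolding hz using frac_le[OF norm_ge_zero order_refl zero_less_one lb[OF zs]] by simp
      consider "Re z = 0" | "Re z = 1" | "\<bar>Im z\<bar> = Y"
        using zR nb by (auto simp: R_def in_cbox_complex_iff in_box_complex_iff)
      then show ?thesis
      proof cases
        case 1
        then have e: "z = \<i> * complex_of_real (Im z)" by (simp add: complex_eq_iff)
        have "cmod (g z) \<le> M" by (subst e) (rule b0)
        then show ?thesis using r1 d by simp
      next
        case 2
        then have e: "z = 1 + \<i> * complex_of_real (Im z)" by (simp add: complex_eq_iff)
        have "cmod (g z) \<le> M" by (subst e) (rule b1)
        then show ?thesis using r1 d by simp
      next
        case 3
        have den: "d * Y \<le> cmod (1 + complex_of_real d * z)" using lb2[of z] 3 by simp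
        have dY: "0 < d * Y" using d Yp by simp
        have "cmod (h z) \<le> C / (d * Y)"
          unfolding hz by (rule frac_le[OF C0 bdd[OF zs] dY den])
        also have "... \<le> M + d" using YC dY by (simp add: divide_le_eq ac_simps)
        finally show ?thesis .
      qed
    qed
    have bR: "bounded R" by (simp add: R_def)
    have hM: "cmod (h (complex_of_real t)) \<le> M + d"
      by (rule maximum_modulus_frontier[OF holh conth bR fr tR])
    moreover have ge: "cmod (g (complex_of_real t)) = cmod (h (complex_of_real t)) * cmod (1 + complex_of_real d * complex_of_real t)"
    proof -
      have "complex_of_real t \<in> strip" using t by (simp add: strip_def)
      then show ?thesis using nz by (simp add: h_def norm_divide)
    qed
    moreover have dd: "cmod (1 + complex_of_real d * complex_of_real t) \<le> 1 + d"
    proof -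
      have "cmod (1 + complex_of_real d * complex_of_real t) = 1 + d * t"
      proof -
        have "1 + complex_of_real d * complex_of_real t = complex_of_real (1 + d * t)" by simp
        then show ?thesis using d t by (simp only: norm_of_real) simp
      qed
      also have "... \<le> 1 + d" using d t by (simp add: mult_left_le)
      finally show ?thesis .
    qed
    ultimately show ?thesis using Md
      by (simp only: ge) (rule mult_mono, simp_all)
  qed
  show ?thesis
  proof (rule field_le_epsilon)
    fix e :: real assume e: "0 < e"
    define d where "d = min 1 (e / (M + 2))"
    have d0: "0 < d" using e M0 by (simp add: d_def)
    have d1: "d \<le> 1" by (simp add: d_def)
    have d2: "d * (M + 2) \<le> e"
    proof -
      have "d \<le> e / (M + 2)" by (simp add: d_def)
      then have "d * (M + 2) \<le> e / (M + 2) * (M + 2)" using M0 by (intro mult_right_mono) auto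
      also have "... = e" using M0 by simp
      finally show ?thesis .
    qed
    have "cmod (g (complex_of_real t)) \<le> (M + d) * (1 + d)" by (rule main[OF d0])
    also have "... = M + d * (M + 1 + d)" by (simp add: algebra_simps)
    also have "... \<le> M + d * (M + 2)" using d0 d1 by (simp add: mult_left_mono)
    also have "... \<le> M + e" using d2 by simp
    finally show "cmod (g (complex_of_real t)) \<le> M + e" .
  qed
qed


definition OS :: "complex set" where "OS = {z. 0 < Re z \<and> Re z < 1}"

definition HM :: "(complex \<Rightarrow> 'n::finite cmat) \<Rightarrow> bool" where
  "HM A \<longleftrightarrow> (\<forall>j k. (\<lambda>z. A z $j$k) holomorphic_on OS \<and> continuous_on strip (\<lambda>z. A z $j$k))"

definition hol_mat :: "(complex \<Rightarrow> 'n::finite cmat) \<Rightarrow> bool" where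
  "hol_mat A \<longleftrightarrow> HM A \<and> (\<exists>C. \<forall>z\<in>strip. norm (A z) \<le> C)"

lemma HM_mult: assumes "HM A" "HM B" shows "HM (\<lambda>z. A z ** B z)"
  using assms unfolding HM_def mm_nth
  by (auto intro!: holomorphic_on_sum holomorphic_on_mult continuous_on_sum continuous_on_mult)

definition fip :: "'n::finite cmat \<Rightarrow> 'n cmat \<Rightarrow> complex" where
  "fip W M = (\<Sum>j\<in>UNIV. \<Sum>k\<in>UNIV. cnj (W$j$k) * M$j$k)"

lemma fip_CS: "cmod (fip W M) \<le> norm W * norm M"
proof -
  have "fip W M = (\<Sum>j\<in>UNIV. cinner (W$j) (M$j))" by (simp add: fip_def cinner_def)
  then have "cmod (fip W M) \<le> (\<Sum>j\<in>UNIV. cmod (cinner (W$j) (M$j)))" by (simp add: norm_sum)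
  also have "... \<le> (\<Sum>j\<in>UNIV. norm (W$j) * norm (M$j))" by (intro sum_mono cinner_CS)
  also have "... \<le> sqrt (\<Sum>j\<in>UNIV. (norm (W$j))^2) * sqrt (\<Sum>j\<in>UNIV. (norm (M$j))^2)"
    by (rule rsum_CS) auto
  also have "... = norm W * norm M" by (simp add: norm_vec_eq[of W] norm_vec_eq[of M])
  finally show ?thesis .
qed

lemma fip_self: "fip M M = complex_of_real ((norm M)^2)"
proof -
  have "fip M M = (\<Sum>j\<in>UNIV. cinner (M$j) (M$j))" by (simp add: fip_def cinner_def)
  also have "... = (\<Sum>j\<in>UNIV. complex_of_real ((norm (M$j))^2))" by (simp add: cinner_self)
  also have "... = complex_of_real ((norm M)^2)" by (simp add: mat_norm_sq_rows[of M])
  finally show ?thesis .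
qed

lemma fip_msc: "fip (msc c W) M = cnj c * fip W M"
  by (simp add: fip_def msc_def sum_distrib_left mult.assoc)

lemma l2seq_diff: assumes "l2seq X" "l2seq Y" shows "l2seq (\<lambda>i. X i - Y i)"
  unfolding l2seq_def
proof (rule summable_comparison_test'[where g = "\<lambda>i. 2 * (norm (X i))^2 + 2 * (norm (Y i))^2"])
  show "summable (\<lambda>i. 2 * (norm (X i))^2 + 2 * (norm (Y i))^2)"
    using assms by (intro summable_add summable_mult) (simp_all add: l2seq_def)
  fix n :: nat
  have "norm (X n - Y n) \<le> norm (X n) + norm (Y n)" by (rule norm_triangle_ineq4)
  then have "(norm (X n - Y n))^2 \<le> (norm (X n) + norm (Y n))^2" by (intro power_mono) auto
  also have "... \<le> 2 * (norm (X n))^2 + 2 * (norm (Y n))^2"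
  proof -
    have "0 \<le> (norm (X n) - norm (Y n))^2" by simp
    then show ?thesis by (simp add: power2_eq_square algebra_simps)
  qed
  finally show "norm ((norm (X n - Y n))^2) \<le> 2 * (norm (X n))^2 + 2 * (norm (Y n))^2" by simp
qed

lemma norm_le_l2norm: assumes Y: "l2seq Y" shows "norm (Y i) \<le> l2norm Y"
proof -
  have "(\<Sum>j\<in>{i}. (norm (Y j))^2) \<le> (\<Sum>j. (norm (Y j))^2)"
    by (rule sum_le_suminf[OF l2seq_summable[OF Y]]) auto
  then have "(norm (Y i))^2 \<le> (l2norm Y)^2" by (simp add: l2norm_sq[OF Y])
  then show ?thesis by (rule sq_le_imp) (rule l2norm_nonneg[OF Y])
qed

lemma entry_le: "cmod (M$j$k) \<le> norm (M::'n::finite cmat)"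
proof -
  have "cmod (M$j$k) \<le> norm (M$j)" by (rule Finite_Cartesian_Product.norm_nth_le)
  also have "... \<le> norm M" by (rule Finite_Cartesian_Product.norm_nth_le)
  finally show ?thesis .
qed

lemma adm_cont: assumes F: "admissible F"
  shows "continuous_on strip (\<lambda>z. F z i $j$k)"
  unfolding continuous_on_iff
proof (intro ballI allI impI)
  fix z e assume z: "z \<in> strip" and e: "(0::real) < e"
  obtain d where d: "d > 0" and dd: "\<forall>w\<in>strip. dist w z < d \<longrightarrow> l2norm (\<lambda>i. F w i - F z i) < e"
    using F z e unfolding admissible_def by blast
  show "\<exists>d>0. \<forall>w\<in>strip. dist w z < d \<longrightarrow> dist (F w i $j$k) (F z i $j$k) < e"
  proof (intro exI conjI ballI impI)
    fix w assume w: "w \<in> strip" "dist w z < d"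
    have l2: "l2seq (\<lambda>i. F w i - F z i)" using F w z by (intro l2seq_diff) (auto simp: admissible_def)
    have "dist (F w i $j$k) (F z i $j$k) = cmod ((F w i - F z i)$j$k)" by (simp add: dist_norm)
    also have "... \<le> norm (F w i - F z i)" by (rule entry_le)
    also have "... \<le> l2norm (\<lambda>i. F w i - F z i)" using norm_le_l2norm[OF l2, of i] by simp
    also have "... < e" using dd w by blast
    finally show "dist (F w i $j$k) (F z i $j$k) < e" .
  qed (rule d)
qed

lemma adm_HM: assumes F: "admissible F" shows "HM (\<lambda>z. F z i)"
  using F adm_cont[OF F] unfolding HM_def admissible_def OS_def by blast

lemma qsum_le:
  assumes Y: "l2seq Y" and S: "finite S"
  shows "Qn S A B Y \<le> norm A * norm B * l2norm Y"
proof -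
  have "(\<Sum>i\<in>S. (norm (A ** Y i ** B))^2) \<le> (\<Sum>i\<in>S. (norm A * norm B)^2 * (norm (Y i))^2)"
  proof (rule sum_mono)
    fix i
    have "norm (A ** Y i ** B) \<le> norm (A ** Y i) * norm B" by (rule mm_le)
    also have "... \<le> norm A * norm (Y i) * norm B" by (intro mult_right_mono mm_le) auto
    finally have "norm (A ** Y i ** B) \<le> norm A * norm B * norm (Y i)" by (simp add: ac_simps)
    then show "(norm (A ** Y i ** B))^2 \<le> (norm A * norm B)^2 * (norm (Y i))^2"
      by (metis norm_ge_zero power_mono power_mult_distrib)
  qed
  also have "... = (norm A * norm B)^2 * (\<Sum>i\<in>S. (norm (Y i))^2)" by (simp add: sum_distrib_left)
  also have "... \<le> (norm A * norm B)^2 * (\<Sum>i. (norm (Y i))^2)"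
    by (intro mult_left_mono sum_le_suminf[OF l2seq_summable[OF Y] S]) auto
  also have "... = (norm A * norm B * l2norm Y)^2"
    by (simp add: l2norm_sq[OF Y] power_mult_distrib)
  finally have "(Qn S A B Y)^2 \<le> (norm A * norm B * l2norm Y)^2" by (simp add: Qn_def sum_nonneg)
  then show ?thesis by (rule sq_le_imp) (simp add: l2norm_nonneg[OF Y])
qed


lemma core_F:
  fixes N0 N1 :: "(nat \<Rightarrow> 'n::finite cmat) \<Rightarrow> real" and A B :: "complex \<Rightarrow> 'n cmat"
  assumes t: "0 < t" "t < 1" and S: "finite S"
    and N0: "\<And>Y. l2seq Y \<Longrightarrow> 0 \<le> N0 Y \<and> N0 Y \<le> 1 + (l2norm Y)^2"
    and N1: "\<And>Y. l2seq Y \<Longrightarrow> 0 \<le> N1 Y \<and> N1 Y \<le> 1 + (l2norm Y)^2"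
    and hA: "hol_mat A" and hB: "hol_mat B"
    and b0: "\<And>s Y. l2seq Y \<Longrightarrow> Qn S (A (\<i> * complex_of_real s)) (B (\<i> * complex_of_real s)) Y \<le> N0 Y"
    and b1: "\<And>s Y. l2seq Y \<Longrightarrow> Qn S (A (1 + \<i> * complex_of_real s)) (B (1 + \<i> * complex_of_real s)) Y \<le> N1 Y"
    and F: "admissible F"
  shows "Qn S (A (complex_of_real t)) (B (complex_of_real t)) (F (complex_of_real t))
     \<le> max (SUP s::real. N0 (F (\<i> * complex_of_real s))) (SUP s::real. N1 (F (1 + \<i> * complex_of_real s)))"
proof -
  obtain Bd where Bd: "\<forall>z\<in>strip. l2norm (F z) \<le> Bd" using F unfolding admissible_def by blast
  have l2F: "l2seq (F z)" if "z \<in> strip" for z using F that unfolding admissible_def by blast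
  have s0: "\<i> * complex_of_real s \<in> strip" for s by (simp add: strip_def)
  have s1: "1 + \<i> * complex_of_real s \<in> strip" for s by (simp add: strip_def)
  have sqb: "1 + (l2norm (F z))^2 \<le> 1 + Bd^2" if "z \<in> strip" for z
    using Bd that l2norm_nonneg[OF l2F[OF that]] by (simp add: power_mono)
  have bdd0: "bdd_above (range (\<lambda>s::real. N0 (F (\<i> * complex_of_real s))))"
  proof (rule bdd_aboveI[where M = "1 + Bd^2"])
    fix x assume "x \<in> range (\<lambda>s::real. N0 (F (\<i> * complex_of_real s)))"
    then obtain s where x: "x = N0 (F (\<i> * complex_of_real s))" by blast
    show "x \<le> 1 + Bd^2" unfolding x using N0[OF l2F[OF s0[of s]]] sqb[OF s0[of s]] by linarith
  qed
  have bdd1: "bdd_above (range (\<lambda>s::real. N1 (F (1 + \<i> * complex_of_real s))))"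
  proof (rule bdd_aboveI[where M = "1 + Bd^2"])
    fix x assume "x \<in> range (\<lambda>s::real. N1 (F (1 + \<i> * complex_of_real s)))"
    then obtain s where x: "x = N1 (F (1 + \<i> * complex_of_real s))" by blast
    show "x \<le> 1 + Bd^2" unfolding x using N1[OF l2F[OF s1[of s]]] sqb[OF s1[of s]] by linarith
  qed
  define M where "M = max (SUP s::real. N0 (F (\<i> * complex_of_real s))) (SUP s::real. N1 (F (1 + \<i> * complex_of_real s)))"
  have M0: "N0 (F (\<i> * complex_of_real s)) \<le> M" for s
    unfolding M_def using cSUP_upper[OF UNIV_I bdd0, of s] by linarith
  have M1: "N1 (F (1 + \<i> * complex_of_real s)) \<le> M" for s
    unfolding M_def using cSUP_upper[OF UNIV_I bdd1, of s] by linarith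
  have Mnn: "0 \<le> M" using M0[of 0] N0[OF l2F[OF s0[of 0]]] by linarith
  define tt where "tt = complex_of_real t"
  have tts: "tt \<in> strip" using t by (simp add: tt_def strip_def)
  define T where "T = F tt"
  define Q where "Q = Qn S (A tt) (B tt) T"
  have Q0: "0 \<le> Q" by (simp add: Q_def Qn_nonneg)
  have "Q \<le> M"
  proof (cases "Q = 0")
    case True then show ?thesis using Mnn by simp
  next
    case False
    then have Qp: "0 < Q" using Q0 by simp
    have Q2: "Q^2 = (\<Sum>i\<in>S. (norm (A tt ** T i ** B tt))^2)"
      by (simp add: Q_def Qn_def sum_nonneg)
    define W where "W i = msc (complex_of_real (1 / Q)) (A tt ** T i ** B tt)" for i
    define g where "g z = (\<Sum>i\<in>S. fip (W i) (A z ** F z i ** B z))" for z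
    have gt: "g tt = complex_of_real Q"
    proof -
      have "g tt = (\<Sum>i\<in>S. complex_of_real ((norm (A tt ** T i ** B tt))^2 / Q))"
        unfolding g_def W_def T_def by (simp add: fip_msc fip_self)
      also have "... = complex_of_real ((\<Sum>i\<in>S. (norm (A tt ** T i ** B tt))^2) / Q)"
        by (simp add: sum_divide_distrib)
      also have "... = complex_of_real Q"
      proof -
        have "(\<Sum>i\<in>S. (norm (A tt ** T i ** B tt))^2) / Q = Q^2 / Q" by (simp only: Q2)
        also have "... = Q" using Qp by (simp add: power2_eq_square)
        finally show ?thesis by (simp only:)
      qed
      finally show ?thesis .
    qed
    have W1: "(\<Sum>i\<in>S. (norm (W i))^2) = 1"
    proof -
      have "(\<Sum>i\<in>S. (norm (W i))^2) = (\<Sum>i\<in>S. (norm (A tt ** T i ** B tt))^2) / Q^2"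
        using Qp by (simp add: W_def norm_msc norm_divide power_divide sum_divide_distrib)
      also have "... = 1" using Qp by (simp add: Q2[symmetric])
      finally show ?thesis .
    qed
    have gb: "cmod (g z) \<le> Qn S (A z) (B z) (F z)" for z
    proof -
      have "cmod (g z) \<le> (\<Sum>i\<in>S. cmod (fip (W i) (A z ** F z i ** B z)))"
        unfolding g_def by (rule norm_sum)
      also have "... \<le> (\<Sum>i\<in>S. norm (W i) * norm (A z ** F z i ** B z))"
        by (intro sum_mono fip_CS)
      also have "... \<le> sqrt (\<Sum>i\<in>S. (norm (W i))^2) * sqrt (\<Sum>i\<in>S. (norm (A z ** F z i ** B z))^2)"
        by (rule rsum_CS) auto
      also have "... = Qn S (A z) (B z) (F z)" by (simp add: W1 Qn_def)
      finally show ?thesis .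
    qed
    obtain CA where CA: "\<forall>z\<in>strip. norm (A z) \<le> CA" using hA unfolding hol_mat_def by blast
    obtain CB where CB: "\<forall>z\<in>strip. norm (B z) \<le> CB" using hB unfolding hol_mat_def by blast
    have gbd: "cmod (g z) \<le> CA * CB * Bd" if z: "z \<in> strip" for z
    proof -
      have "cmod (g z) \<le> Qn S (A z) (B z) (F z)" by (rule gb)
      also have "... \<le> norm (A z) * norm (B z) * l2norm (F z)" by (rule qsum_le[OF l2F[OF z] S])
      also have "... \<le> CA * CB * Bd"
        using CA CB Bd z l2norm_nonneg[OF l2F[OF z]]
        by (intro mult_mono) (auto intro: mult_nonneg_nonneg order_trans[OF norm_ge_zero])
      finally show ?thesis .
    qed
    have HA: "HM A" and HB: "HM B" using hA hB by (auto simp: hol_mat_def)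
    have HMi: "HM (\<lambda>z. A z ** F z i ** B z)" for i
      by (intro HM_mult HA HB adm_HM[OF F])
    have hol: "g holomorphic_on {z. 0 < Re z \<and> Re z < 1}"
      using HMi unfolding g_def fip_def HM_def OS_def
      by (auto intro!: holomorphic_on_sum holomorphic_on_mult holomorphic_on_const)
    have cont: "continuous_on strip g"
      using HMi unfolding g_def fip_def HM_def
      by (auto intro!: continuous_on_sum continuous_on_mult continuous_on_const)
    have "cmod (g (complex_of_real t)) \<le> M"
    proof (rule three_lines[OF hol cont gbd])
      fix y :: real
      have "cmod (g (\<i> * complex_of_real y)) \<le> Qn S (A (\<i> * complex_of_real y)) (B (\<i> * complex_of_real y)) (F (\<i> * complex_of_real y))"
        by (rule gb)
      also have "... \<le> N0 (F (\<i> * complex_of_real y))" by (rule b0[OF l2F[OF s0]])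
      also have "... \<le> M" by (rule M0)
      finally show "cmod (g (\<i> * complex_of_real y)) \<le> M" .
    next
      fix y :: real
      have "cmod (g (1 + \<i> * complex_of_real y)) \<le> Qn S (A (1 + \<i> * complex_of_real y)) (B (1 + \<i> * complex_of_real y)) (F (1 + \<i> * complex_of_real y))"
        by (rule gb)
      also have "... \<le> N1 (F (1 + \<i> * complex_of_real y))" by (rule b1[OF l2F[OF s1]])
      also have "... \<le> M" by (rule M1)
      finally show "cmod (g (1 + \<i> * complex_of_real y)) \<le> M" .
    qed (use t in auto)
    then show ?thesis using gt Q0 by (simp add: tt_def)
  qed
  then show ?thesis by (simp add: Q_def T_def tt_def M_def)
qed

lemma adm_const: assumes T: "l2seq T" shows "admissible (\<lambda>z. T)"
proof -
  have z: "l2norm (\<lambda>i. T i - T i) = 0" by (simp add: l2norm_def)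
  show ?thesis unfolding admissible_def using T z by auto
qed

lemma core:
  fixes N0 N1 :: "(nat \<Rightarrow> 'n::finite cmat) \<Rightarrow> real" and A B :: "complex \<Rightarrow> 'n cmat"
  assumes t: "0 < t" "t < 1" and S: "finite S"
    and N0: "\<And>Y. l2seq Y \<Longrightarrow> 0 \<le> N0 Y \<and> N0 Y \<le> 1 + (l2norm Y)^2"
    and N1: "\<And>Y. l2seq Y \<Longrightarrow> 0 \<le> N1 Y \<and> N1 Y \<le> 1 + (l2norm Y)^2"
    and hA: "hol_mat A" and hB: "hol_mat B"
    and b0: "\<And>s Y. l2seq Y \<Longrightarrow> Qn S (A (\<i> * complex_of_real s)) (B (\<i> * complex_of_real s)) Y \<le> N0 Y"
    and b1: "\<And>s Y. l2seq Y \<Longrightarrow> Qn S (A (1 + \<i> * complex_of_real s)) (B (1 + \<i> * complex_of_real s)) Y \<le> N1 Y"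
    and T: "l2seq T"
  shows "Qn S (A (complex_of_real t)) (B (complex_of_real t)) T \<le> interp N0 N1 t T"
proof -
  have it: "interp N0 N1 t T = Inf {max (SUP s::real. N0 (F (\<i> * complex_of_real s)))
               (SUP s::real. N1 (F (1 + \<i> * complex_of_real s))) | F.
           admissible F \<and> F (complex_of_real t) = T}"
    using t by (simp add: interp_def)
  show ?thesis unfolding it
  proof (rule cInf_greatest)
    show "{max (SUP s::real. N0 (F (\<i> * complex_of_real s)))
               (SUP s::real. N1 (F (1 + \<i> * complex_of_real s))) | F.
           admissible F \<and> F (complex_of_real t) = T} \<noteq> {}"
      using adm_const[OF T] by auto
  next
    fix x assume "x \<in> {max (SUP s::real. N0 (F (\<i> * complex_of_real s)))
               (SUP s::real. N1 (F (1 + \<i> * complex_of_real s))) | F.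
           admissible F \<and> F (complex_of_real t) = T}"
    then obtain F where F: "admissible F" "F (complex_of_real t) = T"
      and x: "x = max (SUP s::real. N0 (F (\<i> * complex_of_real s))) (SUP s::real. N1 (F (1 + \<i> * complex_of_real s)))"
      by blast
    show "Qn S (A (complex_of_real t)) (B (complex_of_real t)) T \<le> x"
      using core_F[OF t S N0 N1 hA hB b0 b1 F(1)] F(2) x by simp
  qed
qed


definition tr :: "'n::finite cmat \<Rightarrow> complex" where
  "tr M = (\<Sum>k\<in>UNIV. M$k$k)"

definition cv :: "real^'n::finite \<Rightarrow> complex^'n" where
  "cv a = (\<chi> k. complex_of_real (a$k))"

lemma tr_comm: "tr (A ** B) = tr (B ** (A::'n::finite cmat))"
  unfolding tr_def mm_nth by (subst sum.swap) (simp add: mult.commute)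

lemma tr_adj: "tr (P ** adj R) = fip R (P::'n::finite cmat)"
  unfolding tr_def mm_nth fip_def by (simp add: mult.commute)

lemma dg_mult: "dg a ** dg b = dg (\<chi> k. a$k * b$k)"
  by (simp add: vec_eq_iff dg_mm_nth) (simp add: dg_def)

lemma adj_dg_cv: "adj (dg (cv a)) = dg (cv a)"
  by (simp add: vec_eq_iff dg_def cv_def)

lemma diagm_sqrt: assumes "\<forall>k. 0 \<le> s$k"
  shows "diagm s = dg (cv (\<chi> k. sqrt (s$k))) ** dg (cv (\<chi> k. sqrt (s$k)))"
  using assms by (simp add: diagm_dg dg_mult cv_def vec_eq_iff of_real_mult[symmetric] del: of_real_mult)

lemma tr_dg: "tr (dg a) = (\<Sum>k\<in>UNIV. a$k)"
  by (simp add: tr_def dg_def)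

lemma tr_sum: "tr (\<Sum>i\<in>S. M i) = (\<Sum>i\<in>S. tr (M i))"
  by (simp add: tr_def sum_component) (rule sum.swap)

lemma sum_mm: "(\<Sum>i\<in>S. M i) ** (Y::'n::finite cmat) = (\<Sum>i\<in>S. M i ** Y)"
  by (simp add: vec_eq_iff mm_nth sum_component sum_distrib_right) (intro allI, rule sum.swap)

lemma tr_unitary: assumes "unitary U" shows "tr (U ** D ** adj U) = tr D"
proof -
  have "tr (U ** D ** adj U) = tr (U ** (D ** adj U))" by (simp add: matrix_mul_assoc)
  also have "... = tr (D ** adj U ** U)" by (rule tr_comm)
  also have "... = tr D" using assms by (simp add: matrix_mul_assoc[symmetric] unitary_def)
  finally show ?thesis .
qed

lemma schatten0: "schatten p (0::'n::finite cmat) \<le> 1"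
proof (cases "p = \<infinity>")
  case True
  have "((*v) (0::'n cmat)) = (\<lambda>x. 0)" by (simp add: fun_eq_iff vec_eq_iff mv_nth)
  then have "opnorm (0::'n cmat) = 0" unfolding opnorm_def by (simp add: onorm_zero)
  then show ?thesis using True by (simp add: schatten_def)
next
  case False
  define s where "s = (SOME s. sing_vals (0::'n cmat) s)"
  have "sing_vals (0::'n cmat) s" unfolding s_def by (rule someI_ex[OF svd_exists])
  then obtain U V where U: "unitary U" and V: "unitary V" and e: "(0::'n cmat) = U ** diagm s ** V"
    by (auto simp: sing_vals_def)
  have "adj U ** (U ** diagm s ** V) ** adj V = (adj U ** U) ** diagm s ** (V ** adj V)"
    by (simp add: matrix_mul_assoc)
  also have "... = diagm s" using U by (simp add: unitary_right[OF V] unitary_def)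
  finally have "diagm s = adj U ** (U ** diagm s ** V) ** adj V" by simp
  also have "... = 0" by (simp add: e[symmetric])
  finally have "diagm s = 0" .
  then have "s$k = 0" for k
  proof -
    have "(diagm s)$k$k = 0" using \<open>diagm s = 0\<close> by simp
    then show ?thesis by (simp add: diagm_def)
  qed
  then show ?thesis using False by (simp add: schatten_def s_def[symmetric] Let_def)
qed


lemma dual_reduce:
  fixes p q :: ereal and T :: "nat \<Rightarrow> 'n::finite cmat" and Pa Pb :: "real^'n \<Rightarrow> bool" and K :: real
  assumes Pp: "\<And>x. schatten p x \<le> 1 \<Longrightarrow> \<exists>U V s. unitary U \<and> unitary V \<and> (\<forall>k. 0 \<le> s$k) \<and>
                    x = U ** diagm s ** V \<and> Pb (\<chi> k. sqrt (s$k))"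
    and Pq: "\<And>y. \<exists>U V t r. unitary U \<and> unitary V \<and> (\<forall>k. 0 \<le> t$k) \<and> y = U ** diagm t ** V \<and>
                    (\<forall>k. 0 \<le> r$k) \<and> schatten q y \<le> (\<Sum>k\<in>UNIV. t$k * r$k) \<and> Pa (\<chi> k. sqrt (r$k))"
    and KB: "\<And>\<alpha> \<beta> W1 W2. (\<forall>k. 0 \<le> \<alpha>$k) \<Longrightarrow> (\<forall>k. 0 \<le> \<beta>$k) \<Longrightarrow> Pa \<alpha> \<Longrightarrow> Pb \<beta> \<Longrightarrow>
                 unitary W1 \<Longrightarrow> unitary W2 \<Longrightarrow>
                 Qn {i. T i \<noteq> 0} (dg (cv \<alpha>) ** W1) (W2 ** dg (cv \<beta>)) T \<le> K"
    and K0: "0 \<le> K"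
  shows "phi_norm p q T \<le> K"
proof -
  let ?S = "{i. T i \<noteq> 0}"
  have main: "schatten q (rho T x) \<le> K^2" if x: "schatten p x \<le> 1" for x
  proof -
    obtain Ux Vx s where Ux: "unitary Ux" and Vx: "unitary Vx" and s0: "\<forall>k. 0 \<le> s$k"
      and xe: "x = Ux ** diagm s ** Vx" and Pbs: "Pb (\<chi> k. sqrt (s$k))"
      using Pp[OF x] by blast
    obtain U V t r where U: "unitary U" and V: "unitary V" and t0: "\<forall>k. 0 \<le> t$k"
      and ye: "rho T x = U ** diagm t ** V" and r0: "\<forall>k. 0 \<le> r$k"
      and sq: "schatten q (rho T x) \<le> (\<Sum>k\<in>UNIV. t$k * r$k)" and Par: "Pa (\<chi> k. sqrt (r$k))"
      using Pq[of "rho T x"] by blast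
    define \<sigma> where "\<sigma> = dg (cv (\<chi> k. sqrt (s$k)))"
    define \<rho> where "\<rho> = dg (cv (\<chi> k. sqrt (r$k)))"
    define Yd where "Yd = adj V ** diagm r ** adj U"
    have tre: "tr (rho T x ** Yd) = complex_of_real (\<Sum>k\<in>UNIV. t$k * r$k)"
    proof -
      have "rho T x ** Yd = U ** diagm t ** (V ** adj V) ** diagm r ** adj U"
        unfolding ye Yd_def by (simp add: matrix_mul_assoc)
      also have "... = U ** (diagm t ** diagm r) ** adj U"
        by (simp add: unitary_right[OF V] matrix_mul_assoc)
      finally have "tr (rho T x ** Yd) = tr (diagm t ** diagm r)" by (simp add: tr_unitary[OF U])
      also have "... = complex_of_real (\<Sum>k\<in>UNIV. t$k * r$k)"
        by (simp add: diagm_dg dg_mult tr_dg)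
      finally show ?thesis .
    qed
    have xs: "x = Ux ** \<sigma> ** \<sigma> ** Vx" using diagm_sqrt[OF s0] xe \<sigma>_def by (simp add: matrix_mul_assoc)
    have ys: "Yd = adj V ** \<rho> ** \<rho> ** adj U" using diagm_sqrt[OF r0] by (simp add: Yd_def \<rho>_def matrix_mul_assoc)
    define A where "A = \<rho> ** adj U"
    define B where "B = Ux ** \<sigma>"
    define A' where "A' = \<rho> ** V"
    define B' where "B' = adj Vx ** \<sigma>"
    have trm: "tr (T i ** x ** adj (T i) ** Yd) = fip (A' ** T i ** B') (A ** T i ** B)" for i
    proof -
      have "tr (T i ** x ** adj (T i) ** Yd) = tr ((T i ** Ux ** \<sigma> ** \<sigma> ** Vx ** adj (T i) ** adj V ** \<rho>) ** (\<rho> ** adj U))"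
        by (simp add: xs ys matrix_mul_assoc)
      also have "... = tr ((\<rho> ** adj U) ** (T i ** Ux ** \<sigma> ** \<sigma> ** Vx ** adj (T i) ** adj V ** \<rho>))"
        by (rule tr_comm)
      also have "... = tr ((A ** T i ** B) ** adj (A' ** T i ** B'))"
        by (simp add: A_def B_def A'_def B'_def adj_mm \<sigma>_def \<rho>_def adj_dg_cv matrix_mul_assoc)
      also have "... = fip (A' ** T i ** B') (A ** T i ** B)" by (rule tr_adj)
      finally show ?thesis .
    qed
    have trsum: "tr (rho T x ** Yd) = (\<Sum>i\<in>?S. fip (A' ** T i ** B') (A ** T i ** B))"
      unfolding rho_def sum_mm tr_sum trm ..
    have QA: "Qn ?S A B T \<le> K"
      unfolding A_def B_def \<rho>_def \<sigma>_def
      by (rule KB) (use r0 s0 Par Pbs U Ux unitary_adj in auto)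
    have QA': "Qn ?S A' B' T \<le> K"
      unfolding A'_def B'_def \<rho>_def \<sigma>_def
      by (rule KB) (use r0 s0 Par Pbs V Vx unitary_adj in auto)
    have "(\<Sum>k\<in>UNIV. t$k * r$k) \<le> cmod (tr (rho T x ** Yd))" unfolding tre norm_of_real by (rule abs_ge_self)
    also have "... \<le> (\<Sum>i\<in>?S. cmod (fip (A' ** T i ** B') (A ** T i ** B)))"
      unfolding trsum by (rule norm_sum)
    also have "... \<le> (\<Sum>i\<in>?S. norm (A' ** T i ** B') * norm (A ** T i ** B))"
      by (intro sum_mono fip_CS)
    also have "... \<le> sqrt (\<Sum>i\<in>?S. (norm (A' ** T i ** B'))^2) * sqrt (\<Sum>i\<in>?S. (norm (A ** T i ** B))^2)"
      by (rule rsum_CS) auto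
    also have "... = Qn ?S A' B' T * Qn ?S A B T" by (simp add: Qn_def)
    also have "... \<le> K * K" using QA QA' K0 by (intro mult_mono) (auto simp: Qn_nonneg)
    finally show ?thesis using sq by (simp add: power2_eq_square)
  qed
  have ne: "{schatten q (rho T x) | x. schatten p x \<le> 1} \<noteq> {}" using schatten0 by blast
  have "Sup {schatten q (rho T x) | x. schatten p x \<le> 1} \<le> K^2"
    by (rule cSup_least[OF ne]) (use main in blast)
  then have "phi_norm p q T \<le> sqrt (K^2)" unfolding phi_norm_def by (rule real_sqrt_le_mono)
  then show ?thesis using K0 by simp
qed


definition pw :: "real \<Rightarrow> complex \<Rightarrow> complex" where
  "pw a w = (if a = 0 then 0 else exp (w * complex_of_real (ln a)))"

lemma pw_norm: assumes "0 \<le> a" shows "cmod (pw a w) = a powr Re w"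
proof (cases "a = 0")
  case True then show ?thesis by (simp add: pw_def)
next
  case False
  then have "0 < a" using assms by simp
  then show ?thesis using False by (simp add: pw_def powr_def)
qed

lemma pw_add: "pw a (u + v) = pw a u * pw a v"
  by (simp add: pw_def distrib_right exp_add)

lemma pw_one: assumes "0 \<le> a" shows "pw a 1 = complex_of_real a"
proof (cases "a = 0")
  case True then show ?thesis by (simp add: pw_def)
next
  case False
  then have "0 < a" using assms by simp
  then have "exp (complex_of_real (ln a)) = complex_of_real a"
    by (subst exp_of_real) simp
  then show ?thesis using False by (simp add: pw_def)
qed

lemma pw_hol: "(\<lambda>z. pw a (u + complex_of_real c * z)) holomorphic_on X"
proof (cases "a = 0")
  case True
  then have "(\<lambda>z. pw a (u + complex_of_real c * z)) = (\<lambda>z. 0)" by (simp add: pw_def fun_eq_iff)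
  then show ?thesis by simp
next
  case False
  then have "(\<lambda>z. pw a (u + complex_of_real c * z)) = (\<lambda>z. exp ((u + complex_of_real c * z) * complex_of_real (ln a)))"
    by (simp add: pw_def fun_eq_iff)
  moreover have "(\<lambda>z. exp ((u + complex_of_real c * z) * complex_of_real (ln a))) holomorphic_on X"
    by (intro holomorphic_intros)
  ultimately show ?thesis by simp
qed

lemma pw_cont: "continuous_on X (\<lambda>z. pw a (u + complex_of_real c * z))"
  by (rule holomorphic_on_imp_continuous_on[OF pw_hol])

lemma powr_sq: "((x::real) powr e)^2 = x powr (2 * e)"
proof -
  have "(x powr e)^2 = x powr e * x powr e" by (rule power2_eq_square)
  also have "... = x powr (e + e)" by (rule powr_add[symmetric])
  also have "e + e = 2 * e" by simp
  finally show ?thesis .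
qed

lemma powr_between:
  fixes a x e0 e1 :: real
  assumes a: "0 \<le> a" and x: "min e0 e1 \<le> x" "x \<le> max e0 e1"
  shows "a powr x \<le> a powr e0 + a powr e1"
proof -
  have g0: "0 \<le> a powr e0" "0 \<le> a powr e1" by simp_all
  have mx: "a powr (max e0 e1) \<le> a powr e0 + a powr e1"
    using g0 by (cases "e0 \<le> e1") (simp_all add: max_def)
  have mn: "a powr (min e0 e1) \<le> a powr e0 + a powr e1"
    using g0 by (cases "e0 \<le> e1") (simp_all add: min_def)
  show ?thesis
  proof (cases "1 \<le> a")
    case True
    have "a powr x \<le> a powr (max e0 e1)" by (rule powr_mono[OF x(2) True])
    then show ?thesis using mx by linarith
  next
    case False
    have "a powr x \<le> a powr (min e0 e1)" by (rule powr_mono'[OF x(1) a]) (use False in simp)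
    then show ?thesis using mn by linarith
  qed
qed

definition pv :: "real^'n::finite \<Rightarrow> complex \<Rightarrow> real \<Rightarrow> complex \<Rightarrow> complex^'n" where
  "pv \<alpha> u c z = (\<chi> k. pw (\<alpha>$k) (u + complex_of_real c * z))"

definition AF :: "real^'n::finite \<Rightarrow> 'n cmat \<Rightarrow> complex \<Rightarrow> real \<Rightarrow> complex \<Rightarrow> 'n cmat" where
  "AF \<alpha> W u c z = dg (pv \<alpha> u c z) ** W"

definition BF :: "real^'n::finite \<Rightarrow> 'n cmat \<Rightarrow> complex \<Rightarrow> real \<Rightarrow> complex \<Rightarrow> 'n cmat" where
  "BF \<beta> W u c z = W ** dg (pv \<beta> u c z)"

lemma pv_norm: assumes "\<forall>k. 0 \<le> \<alpha>$k"
  shows "cmod (pv \<alpha> u c z $ k) = \<alpha>$k powr (Re u + c * Re z)"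
  using assms by (simp add: pv_def pw_norm)

lemma pv_bound: assumes "\<forall>k. 0 \<le> \<alpha>$k" and z: "z \<in> strip"
  shows "cmod (pv \<alpha> u c z $ k) \<le> (\<Sum>j\<in>UNIV. \<alpha>$j powr Re u + \<alpha>$j powr (Re u + c))"
proof -
  have zr: "0 \<le> Re z" "Re z \<le> 1" using z by (auto simp: strip_def)
  have "min (Re u) (Re u + c) \<le> Re u + c * Re z" "Re u + c * Re z \<le> max (Re u) (Re u + c)"
  proof -
    have "min 0 c \<le> c * Re z \<and> c * Re z \<le> max 0 c"
    proof (cases "0 \<le> c")
      case True
      then show ?thesis using zr by (simp add: mult_left_le mult_nonneg_nonneg)
    next
      case False
      then show ?thesis using zr by (simp add: mult_le_0_iff mult_le_cancel_left1)
    qed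
    then show "min (Re u) (Re u + c) \<le> Re u + c * Re z" "Re u + c * Re z \<le> max (Re u) (Re u + c)"
      by (auto simp: min_def max_def)
  qed
  then have "cmod (pv \<alpha> u c z $ k) \<le> \<alpha>$k powr Re u + \<alpha>$k powr (Re u + c)"
    unfolding pv_norm[OF assms(1)] using assms(1) by (intro powr_between) auto
  also have "... \<le> (\<Sum>j\<in>UNIV. \<alpha>$j powr Re u + \<alpha>$j powr (Re u + c))"
    by (rule member_le_sum) auto
  finally show ?thesis .
qed

lemma HM_pv: "HM (\<lambda>z. dg (pv \<alpha> u c z))"
proof (unfold HM_def, intro allI conjI)
  fix j k :: 'a
  show "(\<lambda>z. dg (pv \<alpha> u c z) $ j $ k) holomorphic_on OS"
    by (cases "j = k") (simp_all add: dg_def pv_def pw_hol)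
  show "continuous_on strip (\<lambda>z. dg (pv \<alpha> u c z) $ j $ k)"
    by (cases "j = k") (simp_all add: dg_def pv_def pw_cont)
qed

lemma HM_const: "HM (\<lambda>z. W)"
  unfolding HM_def by auto

lemma hol_AF: assumes "\<forall>k. 0 \<le> \<alpha>$k" shows "hol_mat (AF \<alpha> W u c)"
  unfolding hol_mat_def
proof
  show "HM (AF \<alpha> W u c)" unfolding AF_def by (intro HM_mult HM_pv HM_const)
  show "\<exists>C. \<forall>z\<in>strip. norm (AF \<alpha> W u c z) \<le> C"
    unfolding AF_def using pv_bound[OF assms] by (blast intro: norm_dg_left)
qed

lemma hol_BF: assumes "\<forall>k. 0 \<le> \<alpha>$k" shows "hol_mat (BF \<alpha> W u c)"
  unfolding hol_mat_def
proof
  show "HM (BF \<alpha> W u c)" unfolding BF_def by (intro HM_mult HM_pv HM_const)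
  show "\<exists>C. \<forall>z\<in>strip. norm (BF \<alpha> W u c z) \<le> C"
    unfolding BF_def using pv_bound[OF assms] by (blast intro: norm_dg_right)
qed

lemma AF_frob: assumes "unitary W" "\<forall>k. 0 \<le> \<alpha>$k"
  shows "(norm (AF \<alpha> W u c z))^2 = (\<Sum>k\<in>UNIV. \<alpha>$k powr (2 * (Re u + c * Re z)))"
  unfolding AF_def norm_unitary_right[OF assms(1)] norm_dg_sq pv_norm[OF assms(2)] powr_sq ..

lemma BF_frob: assumes "unitary W" "\<forall>k. 0 \<le> \<alpha>$k"
  shows "(norm (BF \<alpha> W u c z))^2 = (\<Sum>k\<in>UNIV. \<alpha>$k powr (2 * (Re u + c * Re z)))"
  unfolding BF_def norm_unitary_left[OF assms(1)] norm_dg_sq pv_norm[OF assms(2)] powr_sq ..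

lemma frob_le1: assumes "(norm (M::'n::finite cmat))^2 \<le> 1" shows "norm M \<le> 1"
  using assms by (simp add: power_le_one_iff abs_le_square_iff[symmetric])

lemma pv_at: assumes "\<forall>k. 0 \<le> \<alpha>$k" and "u + complex_of_real c * z = 1"
  shows "pv \<alpha> u c z = cv \<alpha>"
  using assms by (simp add: pv_def cv_def vec_eq_iff pw_one)

lemma pv_le1: assumes "\<forall>k. 0 \<le> \<alpha>$k" and "Re u + c * Re z = 0"
  shows "cmod (pv \<alpha> u c z $ k) \<le> 1"
  unfolding pv_norm[OF assms(1)] using assms(2) by simp


lemma norm_axis1: "norm (axis k (1::complex) :: complex^'n::finite) = 1"
proof -
  have "(\<Sum>j\<in>UNIV. (cmod (axis k (1::complex) $ j))^2) = (\<Sum>j\<in>UNIV. if j = k then 1 else (0::real))"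
    by (rule sum.cong) (auto simp: axis_def)
  then show ?thesis by (simp add: norm_vec_eq)
qed

lemma dg_mv_le: assumes "\<And>k. cmod (a$k) \<le> c"
  shows "norm (dg a *v (w::complex^'n::finite)) \<le> c * norm w"
proof -
  have c0: "0 \<le> c" by (rule order_trans[OF norm_ge_zero assms])
  have e: "(dg a *v w)$i = a$i * w$i" for i
  proof -
    have "(dg a *v w)$i = (\<Sum>j\<in>UNIV. if j = i then a$i * w$i else 0)"
      unfolding mv_nth dg_def by (rule sum.cong) auto
    then show ?thesis by simp
  qed
  have "(norm (dg a *v w))^2 = (\<Sum>i\<in>UNIV. (cmod (a$i))^2 * (cmod (w$i))^2)"
    by (simp add: norm_sq_vec e norm_mult power_mult_distrib)
  also have "... \<le> (\<Sum>i\<in>UNIV. c^2 * (cmod (w$i))^2)"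
    by (intro sum_mono mult_right_mono power_mono assms) auto
  also have "... = (c * norm w)^2" by (simp add: norm_sq_vec[of w] sum_distrib_left power_mult_distrib)
  finally show ?thesis by (rule sq_le_imp) (simp add: c0)
qed

lemma sv_le_opnorm:
  fixes x U V :: "'n::finite cmat" and k :: 'n
  assumes U: "unitary U" and V: "unitary V" and s0: "\<forall>k. 0 \<le> s$k" and x: "x = U ** diagm s ** V"
  shows "s$k \<le> opnorm x"
proof -
  define e where "e = (axis k (1::complex) :: complex^'n)"
  define v where "v = adj V *v e"
  have nv: "norm v = 1" unfolding v_def
    using unitary_norm_mv[OF unitary_adj[OF V]] norm_axis1 e_def by simp
  have de: "diagm s *v e = complex_of_real (s$k) *s e"
  proof -
    have "(diagm s *v e)$i = (complex_of_real (s$k) *s e)$i" for i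
    proof -
      have "(diagm s *v e)$i = (\<Sum>j\<in>UNIV. if j = i then (if i = k then complex_of_real (s$k) else 0) else 0)"
        unfolding mv_nth diagm_def e_def axis_def by (rule sum.cong) auto
      then show ?thesis by (simp add: e_def axis_def)
    qed
    then show ?thesis by (simp add: vec_eq_iff)
  qed
  have "x *v v = (U ** diagm s ** (V ** adj V)) *v e"
    unfolding x v_def by (simp add: matrix_vector_mul_assoc matrix_mul_assoc)
  also have "... = U *v (diagm s *v e)"
    by (simp add: unitary_right[OF V] matrix_vector_mul_assoc)
  finally have xv: "x *v v = U *v (diagm s *v e)" .
  then have "norm (x *v v) = norm (diagm s *v e)" by (simp add: unitary_norm_mv[OF U])
  also have "... = s$k"
  proof -
    have "norm (diagm s *v e) = cmod (complex_of_real (s$k)) * norm e" by (simp only: de norm_scale_vec)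
    then show ?thesis using s0 by (simp add: e_def norm_axis1)
  qed
  finally have "norm (x *v v) = s$k" .
  then have "s$k = norm (x *v v)" by simp
  also have "... \<le> opnorm x * norm v" by (rule norm_mv_opnorm)
  finally show ?thesis using nv by simp
qed

lemma Pp_inf:
  assumes "schatten \<infinity> (x::'n::finite cmat) \<le> 1"
  shows "\<exists>U V s. unitary U \<and> unitary V \<and> (\<forall>k. 0 \<le> s$k) \<and> x = U ** diagm s ** V \<and>
           (\<forall>k. (\<chi> k. sqrt (s$k))$k \<le> 1)"
proof -
  obtain s where "sing_vals x s" using svd_exists by blast
  then obtain U V where U: "unitary U" and V: "unitary V" and s0: "\<forall>k. 0 \<le> s$k"
    and xe: "x = U ** diagm s ** V" by (auto simp: sing_vals_def)
  have "s$k \<le> 1" for k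
    using sv_le_opnorm[OF U V s0 xe, of k] assms by (simp add: schatten_def)
  then have "(\<chi> k. sqrt (s$k))$k \<le> 1" for k by simp
  then show ?thesis using U V s0 xe by blast
qed

lemma Pp_fin:
  assumes a: "0 < a" and sx: "schatten (ereal (1/a)) (x::'n::finite cmat) \<le> 1"
  shows "\<exists>U V s. unitary U \<and> unitary V \<and> (\<forall>k. 0 \<le> s$k) \<and> x = U ** diagm s ** V \<and>
           (\<Sum>k\<in>UNIV. (\<chi> k. sqrt (s$k))$k powr (2/a)) \<le> 1"
proof -
  define s where "s = (SOME s. sing_vals x s)"
  have "sing_vals x s" unfolding s_def by (rule someI_ex[OF svd_exists])
  then obtain U V where U: "unitary U" and V: "unitary V" and s0: "\<forall>k. 0 \<le> s$k"
    and xe: "x = U ** diagm s ** V" by (auto simp: sing_vals_def)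
  define \<Sigma> where "\<Sigma> = (\<Sum>k\<in>UNIV. s$k powr (1/a))"
  have "schatten (ereal (1/a)) x = \<Sigma> powr a"
    using a by (simp add: schatten_def s_def[symmetric] \<Sigma>_def Let_def)
  then have "\<Sigma> powr a \<le> 1" using sx by simp
  then have S1: "\<Sigma> \<le> 1"
  proof (rule contrapos_pp)
    assume "\<not> \<Sigma> \<le> 1"
    then have "1 < \<Sigma> powr a" using a by (intro gr_one_powr) auto
    then show "\<not> \<Sigma> powr a \<le> 1" by simp
  qed
  have "(\<chi> k. sqrt (s$k))$k powr (2/a) = s$k powr (1/a)" for k
  proof -
    have "(\<chi> k. sqrt (s$k))$k powr (2/a) = (s$k powr (1/2)) powr (2/a)"
      using s0 by (simp add: powr_half_sqrt)
    also have "... = s$k powr (1/a)" by (simp add: powr_powr)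
    finally show ?thesis .
  qed
  then have "(\<Sum>k\<in>UNIV. (\<chi> k. sqrt (s$k))$k powr (2/a)) = \<Sigma>" by (simp add: \<Sigma>_def)
  then show ?thesis using U V s0 xe S1 by auto
qed

lemma Pq_inf:
  "\<exists>U V t r. unitary U \<and> unitary V \<and> (\<forall>k. 0 \<le> t$k) \<and> (y::'n::finite cmat) = U ** diagm t ** V \<and>
     (\<forall>k. 0 \<le> r$k) \<and> schatten \<infinity> y \<le> (\<Sum>k\<in>UNIV. t$k * r$k) \<and>
     (\<Sum>k\<in>UNIV. (\<chi> k. sqrt (r$k))$k powr 2) \<le> 1"
proof -
  obtain t where "sing_vals y t" using svd_exists by blast
  then obtain U V where U: "unitary U" and V: "unitary V" and t0: "\<forall>k. 0 \<le> t$k"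
    and ye: "y = U ** diagm t ** V" by (auto simp: sing_vals_def)
  define m where "m = Max (range (\<lambda>k. t$k))"
  have "m \<in> range (\<lambda>k. t$k)" unfolding m_def by (rule Max_in) auto
  then obtain k0 where k0: "t$k0 = m" by auto
  have tm: "t$k \<le> t$k0" for k unfolding k0 m_def by (rule Max_ge) auto
  define r where "r = (\<chi> k. if k = k0 then (1::real) else 0)"
  have r0: "\<forall>k. 0 \<le> r$k" by (simp add: r_def)
  have sr: "(\<Sum>k\<in>UNIV. t$k * r$k) = t$k0"
  proof -
    have "(\<Sum>k\<in>UNIV. t$k * r$k) = (\<Sum>k\<in>UNIV. if k = k0 then t$k0 else 0)"
      by (rule sum.cong) (auto simp: r_def)
    then show ?thesis by simp
  qed
  have op: "opnorm y \<le> t$k0"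
    unfolding opnorm_def
  proof (rule onorm_le)
    fix w :: "complex^'n"
    have "y *v w = U *v (diagm t *v (V *v w))" by (simp add: ye matrix_vector_mul_assoc matrix_mul_assoc)
    then have "norm (y *v w) = norm (diagm t *v (V *v w))" by (simp add: unitary_norm_mv[OF U])
    also have "... \<le> t$k0 * norm (V *v w)"
      unfolding diagm_dg by (rule dg_mv_le) (use t0 tm in simp)
    also have "... = t$k0 * norm w" by (simp add: unitary_norm_mv[OF V])
    finally show "norm (y *v w) \<le> t$k0 * norm w" .
  qed
  have "(\<Sum>k\<in>UNIV. (\<chi> k. sqrt (r$k))$k powr 2) = (\<Sum>k\<in>UNIV. if k = k0 then 1 else (0::real))"
    by (rule sum.cong) (auto simp: r_def)
  then have pr: "(\<Sum>k\<in>UNIV. (\<chi> k. sqrt (r$k))$k powr 2) \<le> 1" by simp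
  show ?thesis using U V t0 ye r0 op sr pr
    by (intro exI[of _ U] exI[of _ V] exI[of _ t] exI[of _ r] conjI) (simp_all add: schatten_def)
qed


lemma t_powr: assumes "0 \<le> (t::real)" "0 < q" shows "t * t powr (q - 1) = t powr q"
proof (cases "t = 0")
  case True then show ?thesis using assms by simp
next
  case False
  then have "t * t powr (q - 1) = t powr 1 * t powr (q - 1)" using assms by simp
  also have "... = t powr (1 + (q - 1))" by (rule powr_add[symmetric])
  finally show ?thesis by simp
qed

lemma Pq_fin:
  fixes y :: "'n::finite cmat"
  assumes b: "0 < b" "b \<le> 1"
  shows "\<exists>U V t r. unitary U \<and> unitary V \<and> (\<forall>k. 0 \<le> t$k) \<and> y = U ** diagm t ** V \<and>
     (\<forall>k. 0 \<le> r$k) \<and> schatten (ereal (1/b)) y \<le> (\<Sum>k\<in>UNIV. t$k * r$k) \<and>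
     (if b = 1 then (\<forall>k. (\<chi> k. sqrt (r$k))$k \<le> 1)
      else (\<Sum>k\<in>UNIV. (\<chi> k. sqrt (r$k))$k powr (2/(1-b))) \<le> 1)"
proof -
  define q where "q = 1/b"
  have q0: "0 < q" using b by (simp add: q_def)
  have bq: "b * q = 1" using b by (simp add: q_def)
  define t where "t = (SOME s. sing_vals y s)"
  have "sing_vals y t" unfolding t_def by (rule someI_ex[OF svd_exists])
  then obtain U V where U: "unitary U" and V: "unitary V" and t0: "\<forall>k. 0 \<le> t$k"
    and ye: "y = U ** diagm t ** V" by (auto simp: sing_vals_def)
  define \<Sigma> where "\<Sigma> = (\<Sum>k\<in>UNIV. t$k powr q)"
  define N where "N = \<Sigma> powr b"
  have S0: "0 \<le> \<Sigma>" by (simp add: \<Sigma>_def sum_nonneg)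
  have sch: "schatten (ereal (1/b)) y = N"
    using b by (simp add: schatten_def t_def[symmetric] \<Sigma>_def N_def Let_def q_def)
  show ?thesis
  proof (cases "\<Sigma> = 0")
    case True
    define r where "r = (0::real^'n)"
    have "N = 0" using True by (simp add: N_def)
    then have "schatten (ereal (1/b)) y \<le> (\<Sum>k\<in>UNIV. t$k * r$k)" by (simp add: sch r_def)
    moreover have "(if b = 1 then (\<forall>k. (\<chi> k. sqrt (r$k))$k \<le> 1)
      else (\<Sum>k\<in>UNIV. (\<chi> k. sqrt (r$k))$k powr (2/(1-b))) \<le> 1)" by (simp add: r_def)
    moreover have "\<forall>k. 0 \<le> r$k" by (simp add: r_def)
    ultimately show ?thesis using U V t0 ye by blast
  next
    case False
    then have Sp: "0 < \<Sigma>" using S0 by simp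
    have Np: "0 < N" using Sp by (simp add: N_def)
    have Nq: "N powr q = \<Sigma>" using Sp by (simp add: N_def powr_powr bq)
    define r where "r = (\<chi> k. t$k powr (q - 1) / N powr (q - 1))"
    have r0: "\<forall>k. 0 \<le> r$k" by (simp add: r_def)
    have "(\<Sum>k\<in>UNIV. t$k * r$k) = (\<Sum>k\<in>UNIV. t$k powr q / N powr (q - 1))"
      by (rule sum.cong) (simp_all add: r_def t_powr[OF _ q0] t0)
    also have "... = \<Sigma> / N powr (q - 1)" by (simp add: \<Sigma>_def sum_divide_distrib)
    also have "... = N powr q / N powr (q - 1)" by (simp add: Nq)
    also have "... = N powr (q - (q - 1))" by (simp add: powr_diff)
    also have "... = N" using Np by simp
    finally have sr: "(\<Sum>k\<in>UNIV. t$k * r$k) = N" .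
    have pa: "(if b = 1 then (\<forall>k. (\<chi> k. sqrt (r$k))$k \<le> 1)
      else (\<Sum>k\<in>UNIV. (\<chi> k. sqrt (r$k))$k powr (2/(1-b))) \<le> 1)"
    proof (cases "b = 1")
      case True
      then have "q = 1" by (simp add: q_def)
      then have "r$k \<le> 1" for k using Np by (simp add: r_def)
      then show ?thesis using True by simp
    next
      case bF: False
      have e: "(q - 1) * (1 / (1 - b)) = q" using b bF by (simp add: q_def field_simps)
      have "(\<chi> k. sqrt (r$k))$k powr (2/(1-b)) = t$k powr q / N powr q" for k
      proof -
        have "(\<chi> k. sqrt (r$k))$k powr (2/(1-b)) = (r$k powr (1/2)) powr (2/(1-b))"
          using r0 by (simp add: powr_half_sqrt)
        also have "... = r$k powr (1/(1-b))" by (simp add: powr_powr)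
        also have "... = (t$k powr (q - 1)) powr (1/(1-b)) / (N powr (q - 1)) powr (1/(1-b))"
          by (simp add: r_def powr_divide)
        also have "... = t$k powr q / N powr q" by (simp only: powr_powr e)
        finally show ?thesis .
      qed
      then have "(\<Sum>k\<in>UNIV. (\<chi> k. sqrt (r$k))$k powr (2/(1-b))) = \<Sigma> / N powr q"
        by (simp add: \<Sigma>_def sum_divide_distrib)
      also have "... = 1" using Sp by (simp add: Nq)
      finally show ?thesis using bF by simp
    qed
    show ?thesis using U V t0 ye r0 sr pa sch
      by (intro exI[of _ U] exI[of _ V] exI[of _ t] exI[of _ r] conjI) simp_all
  qed
qed


lemma le_1_sq: "(x::real) \<le> 1 + x^2"
proof -
  have "0 \<le> (x - 1/2)^2" by simp
  then show ?thesis by (simp add: power2_eq_square algebra_simps)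
qed

lemma adm_sup_bdd:
  assumes G: "admissible G" and N: "\<And>Y. l2seq Y \<Longrightarrow> 0 \<le> N Y \<and> N Y \<le> 1 + (l2norm Y)^2"
    and h: "\<And>s. h s \<in> strip"
  shows "bdd_above (range (\<lambda>s::real. N (G (h s))))"
proof -
  obtain Bd where Bd: "\<forall>z\<in>strip. l2norm (G z) \<le> Bd" using G unfolding admissible_def by blast
  have l2G: "l2seq (G z)" if "z \<in> strip" for z using G that unfolding admissible_def by blast
  show ?thesis
  proof (rule bdd_aboveI[where M = "1 + Bd^2"])
    fix x assume "x \<in> range (\<lambda>s::real. N (G (h s)))"
    then obtain s where x: "x = N (G (h s))" by blast
    have "(l2norm (G (h s)))^2 \<le> Bd^2"
      using Bd h[of s] l2norm_nonneg[OF l2G[OF h[of s]]] by (intro power_mono) auto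
    then show "x \<le> 1 + Bd^2" unfolding x using N[OF l2G[OF h[of s]]] by linarith
  qed
qed

lemma NR: "l2seq Y \<Longrightarrow> 0 \<le> R_norm Y \<and> R_norm Y \<le> 1 + (l2norm Y)^2"
  using R_bound le_1_sq order_trans by blast

lemma NC: "l2seq Y \<Longrightarrow> 0 \<le> C_norm Y \<and> C_norm Y \<le> 1 + (l2norm Y)^2"
  using C_bound le_1_sq order_trans by blast

lemma Nmin: "l2seq Y \<Longrightarrow> 0 \<le> min_norm Y \<and> min_norm Y \<le> 1 + (l2norm Y)^2"
proof -
  assume Y: "l2seq Y"
  have "(1 + (l2norm Y)^2) / 2 \<le> 1 + (l2norm Y)^2" by simp
  then show ?thesis using mn_bounds[OF Y] by linarith
qed

lemma interp_RC_bounds: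
  fixes Y :: "nat \<Rightarrow> 'n::finite cmat"
  assumes th: "0 < \<theta>" "\<theta> < 1" and Y: "l2seq Y"
  shows "0 \<le> interp R_norm C_norm \<theta> Y \<and> interp R_norm C_norm \<theta> Y \<le> 1 + (l2norm Y)^2"
proof -
  define X where "X = {max (SUP s::real. R_norm (F (\<i> * complex_of_real s)))
               (SUP s::real. C_norm (F (1 + \<i> * complex_of_real s))) | F :: complex \<Rightarrow> nat \<Rightarrow> 'n cmat.
           admissible F \<and> F (complex_of_real \<theta>) = Y}"
  have it: "interp R_norm C_norm \<theta> Y = Inf X" using th by (simp add: interp_def X_def)
  have s0: "\<i> * complex_of_real s \<in> strip" for s by (simp add: strip_def)
  have lb: "0 \<le> x" if "x \<in> X" for x
  proof -
    obtain F :: "complex \<Rightarrow> nat \<Rightarrow> 'n cmat" where F: "admissible F" and x: "x = max (SUP s::real. R_norm (F (\<i> * complex_of_real s)))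
               (SUP s::real. C_norm (F (1 + \<i> * complex_of_real s)))"
      using \<open>x \<in> X\<close> unfolding X_def by blast
    have bd: "bdd_above (range (\<lambda>s::real. R_norm (F (\<i> * complex_of_real s))))"
      by (rule adm_sup_bdd[OF F NR s0])
    have l2: "l2seq (F (\<i> * complex_of_real 0))" using F s0[of 0] unfolding admissible_def by blast
    have "0 \<le> R_norm (F (\<i> * complex_of_real 0))" using NR[OF l2] by blast
    also have "... \<le> (SUP s::real. R_norm (F (\<i> * complex_of_real s)))" by (rule cSUP_upper[OF UNIV_I bd])
    finally show ?thesis unfolding x by linarith
  qed
  have x0: "max (R_norm Y) (C_norm Y) \<in> X"
    unfolding X_def
  proof (rule CollectI, rule exI[of _ "\<lambda>z. Y"], intro conjI)
    show "max (R_norm Y) (C_norm Y) = max (SUP s::real. R_norm ((\<lambda>z. Y) (\<i> * complex_of_real s)))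
               (SUP s::real. C_norm ((\<lambda>z. Y) (1 + \<i> * complex_of_real s)))" by simp
    show "admissible (\<lambda>z. Y)" by (rule adm_const[OF Y])
  qed simp
  have ne: "X \<noteq> {}" using x0 by blast
  have bb: "bdd_below X" by (rule bdd_belowI[where m = 0]) (rule lb)
  have "0 \<le> Inf X" by (rule cInf_greatest[OF ne]) (rule lb)
  moreover have "Inf X \<le> max (R_norm Y) (C_norm Y)" by (rule cInf_lower[OF x0 bb])
  moreover have "max (R_norm Y) (C_norm Y) \<le> 1 + (l2norm Y)^2" using NR[OF Y] NC[OF Y] by simp
  ultimately show ?thesis unfolding it by linarith
qed

lemma RC_N:
  assumes "0 \<le> \<theta>" "\<theta> \<le> 1" "l2seq Y"
  shows "0 \<le> interp R_norm C_norm \<theta> Y \<and> interp R_norm C_norm \<theta> Y \<le> 1 + (l2norm Y)^2"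
proof -
  consider "\<theta> = 0" | "\<theta> = 1" | "0 < \<theta> \<and> \<theta> < 1" using assms by linarith
  then show ?thesis
  proof cases
    case 1 then show ?thesis using NR[OF assms(3)] by (simp add: interp_def)
  next
    case 2 then show ?thesis using NC[OF assms(3)] by (simp add: interp_def)
  next
    case 3 then show ?thesis using interp_RC_bounds assms(3) by blast
  qed
qed

lemma AF_cong: "u + complex_of_real c * z = u' + complex_of_real c' * z' \<Longrightarrow> AF \<alpha> W u c z = AF \<alpha> W u' c' z'"
  by (simp add: AF_def pv_def)
lemma BF_cong: "u + complex_of_real c * z = u' + complex_of_real c' * z' \<Longrightarrow> BF \<alpha> W u c z = BF \<alpha> W u' c' z'"
  by (simp add: BF_def pv_def)

lemma cvAF: "\<forall>k. 0 \<le> \<alpha>$k \<Longrightarrow> u + complex_of_real c * z = 1 \<Longrightarrow> AF \<alpha> W u c z = dg (cv \<alpha>) ** W"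
  by (simp add: AF_def pv_at)
lemma cvBF: "\<forall>k. 0 \<le> \<alpha>$k \<Longrightarrow> u + complex_of_real c * z = 1 \<Longrightarrow> BF \<alpha> W u c z = W ** dg (cv \<alpha>)"
  by (simp add: BF_def pv_at)

lemma AF_le1: assumes "unitary W" "\<forall>k. 0 \<le> \<alpha>$k" "(\<Sum>k\<in>UNIV. \<alpha>$k powr (2 * e)) \<le> 1" "Re u + c * Re z = e"
  shows "norm (AF \<alpha> W u c z) \<le> 1"
  by (rule frob_le1) (use assms(3) in \<open>simp only: AF_frob[OF assms(1,2)] assms(4)\<close>)
lemma BF_le1: assumes "unitary W" "\<forall>k. 0 \<le> \<alpha>$k" "(\<Sum>k\<in>UNIV. \<alpha>$k powr (2 * e)) \<le> 1" "Re u + c * Re z = e"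
  shows "norm (BF \<alpha> W u c z) \<le> 1"
  by (rule frob_le1) (use assms(3) in \<open>simp only: BF_frob[OF assms(1,2)] assms(4)\<close>)


lemma mult_le_one_left: "0 \<le> (x::real) \<Longrightarrow> 0 \<le> y \<Longrightarrow> y \<le> 1 \<Longrightarrow> y * x \<le> x"
  by (simp add: mult_left_le_one_le)

lemma inner_RC:
  fixes Y :: "nat \<Rightarrow> 'n::finite cmat"
  assumes th: "0 < \<theta>" "\<theta> < 1" and S: "finite S" and Y: "l2seq Y"
    and W1: "unitary W1" and W2: "unitary W2" and a0: "\<forall>k. 0 \<le> \<alpha>$k" and b0: "\<forall>k. 0 \<le> \<beta>$k"
    and sa: "(\<Sum>k\<in>UNIV. \<alpha>$k powr (2 * q')) \<le> 1" and sb: "(\<Sum>k\<in>UNIV. \<beta>$k powr (2 * p)) \<le> 1"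
    and uA: "Re uA = q'" and uB: "Re uB = 0"
  shows "Qn S (AF \<alpha> W1 uA (-q') (complex_of_real \<theta>)) (BF \<beta> W2 uB p (complex_of_real \<theta>)) Y
           \<le> interp R_norm C_norm \<theta> Y"
proof (rule core[OF th S NR NC hol_AF[OF a0] hol_BF[OF b0] _ _ Y])
  fix s :: real and Y' :: "nat \<Rightarrow> 'n cmat" assume Y': "l2seq Y'"
  have nA: "norm (AF \<alpha> W1 uA (-q') (\<i> * complex_of_real s)) \<le> 1"
    by (rule AF_le1[OF W1 a0 sa]) (simp add: uA)
  have eB: "cmod (pv \<beta> uB p (\<i> * complex_of_real s) $ k) \<le> 1" for k
    by (rule pv_le1[OF b0]) (simp add: uB)
  have "Qn S (AF \<alpha> W1 uA (-q') (\<i> * complex_of_real s)) (BF \<beta> W2 uB p (\<i> * complex_of_real s)) Y'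
        \<le> norm (AF \<alpha> W1 uA (-q') (\<i> * complex_of_real s)) * 1 * R_norm Y'"
    unfolding BF_def by (rule ER[OF Y' S W2 eB])
  also have "... \<le> R_norm Y'" using nA NR[OF Y'] by (simp add: mult_le_one_left)
  finally show "Qn S (AF \<alpha> W1 uA (-q') (\<i> * complex_of_real s)) (BF \<beta> W2 uB p (\<i> * complex_of_real s)) Y'
        \<le> R_norm Y'" .
next
  fix s :: real and Y' :: "nat \<Rightarrow> 'n cmat" assume Y': "l2seq Y'"
  have nB: "norm (BF \<beta> W2 uB p (1 + \<i> * complex_of_real s)) \<le> 1"
    by (rule BF_le1[OF W2 b0 sb]) (simp add: uB)
  have eA: "cmod (pv \<alpha> uA (-q') (1 + \<i> * complex_of_real s) $ k) \<le> 1" for k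
    by (rule pv_le1[OF a0]) (simp add: uA)
  have "Qn S (AF \<alpha> W1 uA (-q') (1 + \<i> * complex_of_real s)) (BF \<beta> W2 uB p (1 + \<i> * complex_of_real s)) Y'
        \<le> 1 * norm (BF \<beta> W2 uB p (1 + \<i> * complex_of_real s)) * C_norm Y'"
    unfolding AF_def by (rule EC[OF Y' S W1 eA])
  also have "... \<le> C_norm Y'" using nB NC[OF Y'] by (simp add: mult_le_one_left)
  finally show "Qn S (AF \<alpha> W1 uA (-q') (1 + \<i> * complex_of_real s)) (BF \<beta> W2 uB p (1 + \<i> * complex_of_real s)) Y'
        \<le> C_norm Y'" .
qed

lemma outer:
  fixes T :: "nat \<Rightarrow> 'n::finite cmat"
  assumes ps: "0 < \<psi>" "\<psi> < 1" and th: "0 \<le> \<theta>" "\<theta> \<le> 1" and S: "finite S" and T: "l2seq T"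
    and W1: "unitary W1" and W2: "unitary W2" and a0: "\<forall>k. 0 \<le> \<alpha>$k" and b0: "\<forall>k. 0 \<le> \<beta>$k"
    and sa: "(\<Sum>k\<in>UNIV. \<alpha>$k powr (2 * q')) \<le> 1" and sb: "(\<Sum>k\<in>UNIV. \<beta>$k powr (2 * p)) \<le> 1"
  shows "Qn S (AF \<alpha> W1 (complex_of_real q') (-q'*\<theta>) (complex_of_real \<psi>))
              (BF \<beta> W2 (complex_of_real p) (-p*(1-\<theta>)) (complex_of_real \<psi>)) T
           \<le> interp min_norm (interp R_norm C_norm \<theta>) \<psi> T"
proof (rule core[OF ps S Nmin _ hol_AF[OF a0] hol_BF[OF b0] _ _ T])
  fix Y :: "nat \<Rightarrow> 'n cmat" assume "l2seq Y"
  then show "0 \<le> interp R_norm C_norm \<theta> Y \<and> interp R_norm C_norm \<theta> Y \<le> 1 + (l2norm Y)^2"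
    using RC_N th by blast
next
  fix s :: real and Y' :: "nat \<Rightarrow> 'n cmat" assume Y': "l2seq Y'"
  let ?A = "AF \<alpha> W1 (complex_of_real q') (-q'*\<theta>) (\<i> * complex_of_real s)"
  let ?B = "BF \<beta> W2 (complex_of_real p) (-p*(1-\<theta>)) (\<i> * complex_of_real s)"
  have nA: "norm ?A \<le> 1" by (rule AF_le1[OF W1 a0 sa]) simp
  have nB: "norm ?B \<le> 1" by (rule BF_le1[OF W2 b0 sb]) simp
  have "Qn S ?A ?B Y' \<le> norm ?A * norm ?B * min_norm Y'" by (rule E0[OF Y' S])
  also have "... \<le> min_norm Y'"
  proof -
    have "norm ?A * norm ?B \<le> 1" using nA nB by (simp add: mult_le_one)
    then show ?thesis using Nmin[OF Y'] by (simp add: mult_le_one_left)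
  qed
  finally show "Qn S ?A ?B Y' \<le> min_norm Y'" .
next
  fix s :: real and Y' :: "nat \<Rightarrow> 'n cmat" assume Y': "l2seq Y'"
  let ?z = "1 + \<i> * complex_of_real s"
  let ?A = "AF \<alpha> W1 (complex_of_real q') (-q'*\<theta>) ?z"
  let ?B = "BF \<beta> W2 (complex_of_real p) (-p*(1-\<theta>)) ?z"
  consider "\<theta> = 0" | "\<theta> = 1" | "0 < \<theta> \<and> \<theta> < 1" using th by linarith
  then show "Qn S ?A ?B Y' \<le> interp R_norm C_norm \<theta> Y'"
  proof cases
    case 1
    have nA: "norm ?A \<le> 1" by (rule AF_le1[OF W1 a0 sa]) (simp add: 1)
    have eB: "cmod (pv \<beta> (complex_of_real p) (-p*(1-\<theta>)) ?z $ k) \<le> 1" for k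
      by (rule pv_le1[OF b0]) (simp add: 1)
    have "Qn S ?A ?B Y' \<le> norm ?A * 1 * R_norm Y'" unfolding BF_def by (rule ER[OF Y' S W2 eB])
    also have "... \<le> R_norm Y'" using nA NR[OF Y'] by (simp add: mult_le_one_left)
    finally show ?thesis using 1 by (simp add: interp_def)
  next
    case 2
    have nB: "norm ?B \<le> 1" by (rule BF_le1[OF W2 b0 sb]) (simp add: 2)
    have eA: "cmod (pv \<alpha> (complex_of_real q') (-q'*\<theta>) ?z $ k) \<le> 1" for k
      by (rule pv_le1[OF a0]) (simp add: 2)
    have "Qn S ?A ?B Y' \<le> 1 * norm ?B * C_norm Y'" unfolding AF_def by (rule EC[OF Y' S W1 eA])
    also have "... \<le> C_norm Y'" using nB NC[OF Y'] by (simp add: mult_le_one_left)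
    finally show ?thesis using 2 by (simp add: interp_def)
  next
    case 3
    define uA where "uA = complex_of_real q' + complex_of_real (-q'*\<theta>) * ?z + complex_of_real (q'*\<theta>)"
    define uB where "uB = complex_of_real p + complex_of_real (-p*(1-\<theta>)) * ?z - complex_of_real (p*\<theta>)"
    have eA: "?A = AF \<alpha> W1 uA (-q') (complex_of_real \<theta>)"
      by (rule AF_cong) (simp add: uA_def algebra_simps)
    have eB: "?B = BF \<beta> W2 uB p (complex_of_real \<theta>)"
      by (rule BF_cong) (simp add: uB_def algebra_simps)
    have ruA: "Re uA = q'" by (simp add: uA_def algebra_simps)
    have ruB: "Re uB = 0" by (simp add: uB_def algebra_simps)
    show ?thesis unfolding eA eB
      using 3 by (intro inner_RC[OF _ _ S Y' W1 W2 a0 b0 sa sb ruA ruB]) auto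
  qed
qed


lemma cplx_eq1: "r + c * t = 1 \<Longrightarrow> complex_of_real r + complex_of_real c * complex_of_real t = 1"
proof -
  assume h: "r + c * t = 1"
  have "complex_of_real r + complex_of_real c * complex_of_real t = complex_of_real (r + c * t)" by simp
  then show ?thesis using h by simp
qed

lemma KB_lemma:
  fixes T :: "nat \<Rightarrow> 'n::finite cmat"
  assumes th: "0 \<le> \<theta>" "\<theta> \<le> 1" and ps: "0 \<le> \<psi>" "\<psi> \<le> 1" and S: "finite S" and T: "l2seq T"
    and W1: "unitary W1" and W2: "unitary W2" and a0: "\<forall>k. 0 \<le> \<alpha>$k" and b0: "\<forall>k. 0 \<le> \<beta>$k"
    and Pa: "if \<theta>*\<psi> = 1 then (\<forall>k. \<alpha>$k \<le> 1) else (\<Sum>k\<in>UNIV. \<alpha>$k powr (2/(1-\<theta>*\<psi>))) \<le> 1"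
    and Pb: "if 1-\<psi>+\<theta>*\<psi> = 0 then (\<forall>k. \<beta>$k \<le> 1) else (\<Sum>k\<in>UNIV. \<beta>$k powr (2/(1-\<psi>+\<theta>*\<psi>))) \<le> 1"
  shows "Qn S (dg (cv \<alpha>) ** W1) (W2 ** dg (cv \<beta>)) T \<le> interp min_norm (interp R_norm C_norm \<theta>) \<psi> T"
proof -
  have cva: "cmod (cv \<alpha> $ k) = \<alpha>$k" for k using a0 by (simp add: cv_def)
  have cvb: "cmod (cv \<beta> $ k) = \<beta>$k" for k using b0 by (simp add: cv_def)
  have eA1: "dg (cv \<alpha>) ** W1 = AF \<alpha> W1 1 0 0" by (rule cvAF[OF a0, symmetric]) simp
  have eB1: "W2 ** dg (cv \<beta>) = BF \<beta> W2 1 0 0" by (rule cvBF[OF b0, symmetric]) simp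
  consider "\<psi> = 0" | "\<psi> = 1" | "0 < \<psi> \<and> \<psi> < 1" using ps by linarith
  then show ?thesis
  proof cases
    case 1
    have sa: "(\<Sum>k\<in>UNIV. \<alpha>$k powr (2 * 1)) \<le> 1" using Pa 1 by simp
    have sb: "(\<Sum>k\<in>UNIV. \<beta>$k powr (2 * 1)) \<le> 1" using Pb 1 by simp
    have nA: "norm (dg (cv \<alpha>) ** W1) \<le> 1" unfolding eA1 by (rule AF_le1[OF W1 a0 sa]) simp
    have nB: "norm (W2 ** dg (cv \<beta>)) \<le> 1" unfolding eB1 by (rule BF_le1[OF W2 b0 sb]) simp
    have "Qn S (dg (cv \<alpha>) ** W1) (W2 ** dg (cv \<beta>)) T \<le> norm (dg (cv \<alpha>) ** W1) * norm (W2 ** dg (cv \<beta>)) * min_norm T"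
      by (rule E0[OF T S])
    also have "... \<le> min_norm T"
    proof -
      have "norm (dg (cv \<alpha>) ** W1) * norm (W2 ** dg (cv \<beta>)) \<le> 1" using nA nB by (simp add: mult_le_one)
      then show ?thesis using Nmin[OF T] by (simp add: mult_le_one_left)
    qed
    finally show ?thesis using 1 by (simp add: interp_def)
  next
    case 2
    have it: "interp min_norm (interp R_norm C_norm \<theta>) \<psi> T = interp R_norm C_norm \<theta> T"
      using 2 by (simp add: interp_def)
    consider "\<theta> = 0" | "\<theta> = 1" | "0 < \<theta> \<and> \<theta> < 1" using th by linarith
    then show ?thesis
    proof cases
      case t0: 1
      have sa: "(\<Sum>k\<in>UNIV. \<alpha>$k powr (2 * 1)) \<le> 1" using Pa 2 t0 by simp
      have bb: "cmod (cv \<beta> $ k) \<le> 1" for k using Pb 2 t0 cvb by simp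
      have nA: "norm (dg (cv \<alpha>) ** W1) \<le> 1" unfolding eA1 by (rule AF_le1[OF W1 a0 sa]) simp
      have "Qn S (dg (cv \<alpha>) ** W1) (W2 ** dg (cv \<beta>)) T \<le> norm (dg (cv \<alpha>) ** W1) * 1 * R_norm T"
        by (rule ER[OF T S W2 bb])
      also have "... \<le> R_norm T" using nA NR[OF T] by (simp add: mult_le_one_left)
      finally show ?thesis using t0 it by (simp add: interp_def)
    next
      case t1: 2
      have sb: "(\<Sum>k\<in>UNIV. \<beta>$k powr (2 * 1)) \<le> 1" using Pb 2 t1 by simp
      have aa: "cmod (cv \<alpha> $ k) \<le> 1" for k using Pa 2 t1 cva by simp
      have nB: "norm (W2 ** dg (cv \<beta>)) \<le> 1" unfolding eB1 by (rule BF_le1[OF W2 b0 sb]) simp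
      have "Qn S (dg (cv \<alpha>) ** W1) (W2 ** dg (cv \<beta>)) T \<le> 1 * norm (W2 ** dg (cv \<beta>)) * C_norm T"
        by (rule EC[OF T S W1 aa])
      also have "... \<le> C_norm T" using nB NC[OF T] by (simp add: mult_le_one_left)
      finally show ?thesis using t1 it by (simp add: interp_def)
    next
      case t3: 3
      define q' where "q' = 1 / (1 - \<theta>)"
      define p where "p = 1 / \<theta>"
      have sa: "(\<Sum>k\<in>UNIV. \<alpha>$k powr (2 * q')) \<le> 1" using Pa 2 t3 by (simp add: q'_def)
      have sb: "(\<Sum>k\<in>UNIV. \<beta>$k powr (2 * p)) \<le> 1" using Pb 2 t3 by (simp add: p_def)
      have eA: "dg (cv \<alpha>) ** W1 = AF \<alpha> W1 (complex_of_real q') (-q') (complex_of_real \<theta>)"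
        by (rule cvAF[OF a0, symmetric]) (rule cplx_eq1, use t3 in \<open>simp add: q'_def field_simps\<close>)
      have eB: "W2 ** dg (cv \<beta>) = BF \<beta> W2 0 p (complex_of_real \<theta>)"
      proof (rule cvBF[OF b0, symmetric])
        have "p * \<theta> = 1" using t3 by (simp add: p_def)
        then have "complex_of_real p * complex_of_real \<theta> = 1" by (metis of_real_1 of_real_mult)
        then show "0 + complex_of_real p * complex_of_real \<theta> = 1" by simp
      qed
      show ?thesis unfolding eA eB it
        using t3 by (intro inner_RC[OF _ _ S T W1 W2 a0 b0 sa sb]) auto
    qed
  next
    case 3
    define b where "b = \<theta> * \<psi>"
    define a where "a = 1 - \<psi> + \<theta> * \<psi>"
    have b1: "b < 1"
    proof -
      have h: "\<theta> * \<psi> \<le> \<psi>" using th 3 by (simp add: mult_left_le_one_le)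
      show ?thesis using 3 h unfolding b_def by linarith
    qed
    have a0': "0 < a"
    proof -
      have "0 \<le> \<theta> * \<psi>" using th 3 by simp
      then show ?thesis using 3 by (simp add: a_def)
    qed
    define q' where "q' = 1 / (1 - b)"
    define p where "p = 1 / a"
    have sa: "(\<Sum>k\<in>UNIV. \<alpha>$k powr (2 * q')) \<le> 1" using Pa b1 by (simp add: q'_def b_def)
    have sb: "(\<Sum>k\<in>UNIV. \<beta>$k powr (2 * p)) \<le> 1" using Pb a0' by (simp add: p_def a_def)
    have eA: "dg (cv \<alpha>) ** W1 = AF \<alpha> W1 (complex_of_real q') (-q'*\<theta>) (complex_of_real \<psi>)"
      by (rule cvAF[OF a0, symmetric]) (rule cplx_eq1, use b1 in \<open>simp add: q'_def b_def field_simps\<close>)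
    have eB: "W2 ** dg (cv \<beta>) = BF \<beta> W2 (complex_of_real p) (-p*(1-\<theta>)) (complex_of_real \<psi>)"
      by (rule cvBF[OF b0, symmetric]) (rule cplx_eq1, use a0' in \<open>simp add: p_def a_def field_simps\<close>)
    show ?thesis unfolding eA eB
      using 3 th by (intro outer[OF _ _ _ _ S T W1 W2 a0 b0 sa sb]) auto
  qed
qed


lemma ereal_inv_cases:
  assumes "1 \<le> p" "inverse p = ereal a"
  shows "(a = 0 \<and> p = \<infinity>) \<or> (a \<noteq> 0 \<and> p = ereal (1/a))"
proof (cases p)
  case (real r)
  then have r1: "1 \<le> r" using assms(1) by simp
  then have "inverse p = ereal (inverse r)" using real by simp
  then have "a = inverse r" using assms(2) by simp
  then show ?thesis using real r1 by (auto simp: inverse_eq_divide)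
next
  case PInf then show ?thesis using assms(2) by simp
next
  case MInf then show ?thesis using assms(1) by simp
qed

theorem lemma4p3:
  fixes p q :: ereal and \<theta> \<psi> :: real and T :: "nat \<Rightarrow> complex^'n::finite^'n"
  assumes "1 \<le> p" and "p \<le> q"
    and "0 \<le> \<theta>" and "\<theta> \<le> 1" and "0 \<le> \<psi>" and "\<psi> \<le> 1"
    and "inverse p = ereal (1 - \<psi> + \<theta> * \<psi>)"
    and "inverse q = ereal (\<theta> * \<psi>)"
    and "finite {i. T i \<noteq> 0}"
  shows "phi_norm p q T \<le> interp min_norm (interp R_norm C_norm \<theta>) \<psi> T"
proof -
  define a where "a = 1 - \<psi> + \<theta> * \<psi>"
  define b where "b = \<theta> * \<psi>"
  have pc: "(a = 0 \<and> p = \<infinity>) \<or> (a \<noteq> 0 \<and> p = ereal (1/a))"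
    unfolding a_def by (rule ereal_inv_cases[OF assms(1,7)])
  have q1: "1 \<le> q" using assms(1,2) by (rule order_trans)
  have qc: "(b = 0 \<and> q = \<infinity>) \<or> (b \<noteq> 0 \<and> q = ereal (1/b))"
    unfolding b_def by (rule ereal_inv_cases[OF q1 assms(8)])
  have bnn: "0 \<le> b" using assms(3,5) by (simp add: b_def)
  have ble: "b \<le> 1" using assms(3-6) by (simp add: b_def mult_le_one)
  have ann: "0 \<le> a"
  proof -
    have "0 \<le> \<theta> * \<psi>" using assms(3,5) by simp
    then show ?thesis using assms(6) by (simp add: a_def)
  qed
  have T: "l2seq T" unfolding l2seq_def by (rule summable_finite[OF assms(9)]) simp
  define Pa where "Pa \<alpha> = (if \<theta>*\<psi> = 1 then (\<forall>k. \<alpha>$k \<le> 1) else (\<Sum>k\<in>UNIV. \<alpha>$k powr (2/(1-\<theta>*\<psi>))) \<le> 1)"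
    for \<alpha> :: "real^'n"
  define Pb where "Pb \<beta> = (if 1-\<psi>+\<theta>*\<psi> = 0 then (\<forall>k. \<beta>$k \<le> 1) else (\<Sum>k\<in>UNIV. \<beta>$k powr (2/(1-\<psi>+\<theta>*\<psi>))) \<le> 1)"
    for \<beta> :: "real^'n"
  have KB: "Qn {i. T i \<noteq> 0} (dg (cv \<alpha>) ** W1) (W2 ** dg (cv \<beta>)) T \<le> interp min_norm (interp R_norm C_norm \<theta>) \<psi> T"
    if "\<forall>k. 0 \<le> \<alpha>$k" "\<forall>k. 0 \<le> \<beta>$k" "Pa \<alpha>" "Pb \<beta>" "unitary W1" "unitary W2" for \<alpha> \<beta> W1 W2
    by (rule KB_lemma[OF assms(3-6) assms(9) T that(5,6,1,2)]) (use that(3,4) in \<open>simp_all add: Pa_def Pb_def\<close>)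
  show ?thesis
  proof (rule dual_reduce[where Pa = Pa and Pb = Pb])
    fix x :: "'n cmat" assume x: "schatten p x \<le> 1"
    show "\<exists>U V s. unitary U \<and> unitary V \<and> (\<forall>k. 0 \<le> s$k) \<and> x = U ** diagm s ** V \<and> Pb (\<chi> k. sqrt (s$k))"
      using pc
    proof
      assume h: "a = 0 \<and> p = \<infinity>"
      then have "schatten \<infinity> x \<le> 1" using x by simp
      from Pp_inf[OF this] show ?thesis using h by (simp add: Pb_def a_def)
    next
      assume h: "a \<noteq> 0 \<and> p = ereal (1/a)"
      then have ap: "0 < a" using ann by simp
      have "schatten (ereal (1/a)) x \<le> 1" using x h by simp
      from Pp_fin[OF ap this] show ?thesis using h by (simp add: Pb_def a_def)
    qed
  next
    fix y :: "'n cmat"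
    show "\<exists>U V t r. unitary U \<and> unitary V \<and> (\<forall>k. 0 \<le> t$k) \<and> y = U ** diagm t ** V \<and>
                    (\<forall>k. 0 \<le> r$k) \<and> schatten q y \<le> (\<Sum>k\<in>UNIV. t$k * r$k) \<and> Pa (\<chi> k. sqrt (r$k))"
      using qc
    proof
      assume h: "b = 0 \<and> q = \<infinity>"
      have tb: "\<theta> * \<psi> = 0" using h by (simp add: b_def)
      have qi: "q = \<infinity>" using h by simp
      from Pq_inf[of y] show ?thesis by (simp add: Pa_def tb qi)
    next
      assume h: "b \<noteq> 0 \<and> q = ereal (1/b)"
      then have bp: "0 < b" using bnn by simp
      have qb: "q = ereal (1/b)" using h by simp
      have Pa_b: "Pa \<alpha> = (if b = 1 then (\<forall>k. \<alpha>$k \<le> 1) else (\<Sum>k\<in>UNIV. \<alpha>$k powr (2/(1-b))) \<le> 1)"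
        for \<alpha> by (simp add: Pa_def b_def)
      from Pq_fin[OF bp ble, of y] show ?thesis by (simp only: Pa_b qb)
    qed
  next
    fix \<alpha> \<beta> :: "real^'n" and W1 W2 :: "'n cmat"
    assume "\<forall>k. 0 \<le> \<alpha>$k" "\<forall>k. 0 \<le> \<beta>$k" "Pa \<alpha>" "Pb \<beta>" "unitary W1" "unitary W2"
    then show "Qn {i. T i \<noteq> 0} (dg (cv \<alpha>) ** W1) (W2 ** dg (cv \<beta>)) T \<le> interp min_norm (interp R_norm C_norm \<theta>) \<psi> T"
      by (rule KB)
  next
    have u1: "unitary (mat 1 :: 'n cmat)" by (simp add: unitary_def)
    have "Pa 0" "Pb 0" by (simp_all add: Pa_def Pb_def)
    then have "Qn {i. T i \<noteq> 0} (dg (cv 0) ** mat 1) (mat 1 ** dg (cv 0)) T \<le> interp min_norm (interp R_norm C_norm \<theta>) \<psi> T"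
      using u1 by (intro KB) auto
    then show "0 \<le> interp min_norm (interp R_norm C_norm \<theta>) \<psi> T"
      using Qn_nonneg order_trans by blast
  qed
qed


end
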